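(* In the stochastic approximation setting described in the context (with $\mu>0$ chosen so that $\alpha_2>0$), let $\epsilon_k=\epsilon/(k+K)^\xi$ with $\epsilon>0$, $\xi\in(0,1]$, where $K=\max(1,\epsilon\alpha_3/\alpha_2)$ if $\xi=1$, and $K=\max\big(1,(\epsilon\alpha_3/\alpha_2)^{1/\xi},[2\xi/(\alpha_2\epsilon)]^{1/(1-\xi)}\big)$ if $\xi\in(0,1)$. Then for all $k\ge0$: (1) if $\xi=1$ and $\epsilon<1/\alpha_2$: $\mathbb{E}[\|x_k-x^*\|_c^2]\le\alpha_1\|x_0-x^*\|_c^2\left(\frac{K}{k+K}\right)^{\alpha_2\epsilon}+\frac{4\epsilon^2\alpha_4}{1-\alpha_2\epsilon}\frac{A+2B\|x^*\|_c^2}{(k+K)^{\alpha_2\epsilon}}$; (2) if $\xi=1$ and $\epsilon=1/\alpha_2$: $\mathbb{E}[\|x_k-x^*\|_c^2]\le\alpha_1\|x_0-x^*\|_c^2\frac{K}{k+K}+\frac{4\alpha_4}{\alpha_2^2}\frac{(A+2B\|x^*\|_c^2)\log(k+K)}{k+K}$; (3) if $\xi=1$ and $\epsilon>1/\alpha_2$: $\mathbb{E}[\|x_k-x^*\|_c^2]\le\alpha_1\|x_0-x^*\|_c^2\left(\frac{K}{k+K}\right)^{\alpha_2\epsilon}+\frac{4e\epsilon^2\alpha_4}{\alpha_2\epsilon-1}\frac{A+2B\|x^*\|_c^2}{k+K}$; (4) if $\xi\in(0,1)$: $\mathbb{E}[\|x_k-x^*\|_c^2]\le\alpha_1\|x_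0-x^*\|_c^2\exp\left\{-\frac{\alpha_2\epsilon}{1-\xi}\left[(k+K)^{1-\xi}-K^{1-\xi}\right]\right\}+\frac{2\epsilon\alpha_4}{\alpha_2}\frac{A+2B\|x^*\|_c^2}{(k+K)^\xi}$.
   Context: Let $\|\cdot\|_c,\|\cdot\|_e$ be arbitrary norms on $\mathbb{R}^d$. Let $\mathcal H:\mathbb{R}^d\to\mathbb{R}^d$ satisfy $\|\mathcal H(x)-\mathcal H(y)\|_c\le\gamma\|x-y\|_c$ for all $x,y$, for some $\gamma\in(0,1)$, and let $x^*$ be its unique fixed point. Fix a deterministic $x_0\in\mathbb{R}^d$ and define $x_{k+1}=x_k+\epsilon_k(\mathcal H(x_k)-x_k+w_k)$, where $\{w_k\}$ are random vectors such that, letting $\mathcal F_k$ be the $\sigma$-algebra generated by $x_0,w_0,\dots,x_{k-1},w_{k-1},x_k$, for all $k\ge0$: $\mathbb{E}[w_k\mid\mathcal F_k]=0$ and $\mathbb{E}[\|w_k\|_e^2\mid\mathcal F_k]\le A+B\|x_k\|_e^2$ for constants $A,B>0$. A convex differentiable $h$ is $L$-smooth w.r.t. a norm $\|\cdot\|$ if $h(y)\le h(x)+\langle\nabla h(x),y-x\rangle+\frac L2\|x-y\|^2$ for all $x,y$. Let $\|\cdot\|_s$ be a norm such that $g(x)=\frac12\|x\|_s^2$ is $L$-smooth w.r.t. $\|\cdot\|_s$, and let $\ell_{cs},\ell_{es}\in(0,1]$, $u_{cs},u_{es}\in[1,\infty)$ satisfy $\ell_{cs}\|x\|_c\le\|x\|_s\le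 u_{cs}\|x\|_c$ and $\ell_{es}\|x\|_e\le\|x\|_s\le u_{es}\|x\|_e$ for all $x$. For $\mu>0$ define $\alpha_1=\frac{1+\mu/\ell_{cs}^2}{1+\mu/u_{cs}^2}$, $\alpha_2=1-\gamma\alpha_1^{1/2}$, $\alpha_3=\frac{4u_{cs}^2u_{es}^2(B+2)L(\ell_{cs}^2+\mu)}{\mu\ell_{cs}^2\ell_{es}^2}$, $\alpha_4=\frac{\alpha_3}{2(B+2)}$; $\mu$ is chosen so that $\alpha_2>0$. *)

theory Defs
  imports "HOL-Probability.Probability"
begin

definition is_norm :: "('a::real_vector \<Rightarrow> real) \<Rightarrow> bool" where
  "is_norm n \<longleftrightarrow> (\<forall>x. 0 \<le> n x) \<and> (\<forall>x. n x = 0 \<longleftrightarrow> x = 0)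
     \<and> (\<forall>c x. n (c *\<^sub>R x) = \<bar>c\<bar> * n x) \<and> (\<forall>x y. n (x + y) \<le> n x + n y)"

definition L_smooth :: "('a::euclidean_space \<Rightarrow> real) \<Rightarrow> ('a \<Rightarrow> real) \<Rightarrow> real \<Rightarrow> bool" where
  "L_smooth h n L \<longleftrightarrow> convex_on UNIV h \<and>
     (\<exists>grad. (\<forall>x. (h has_derivative (\<lambda>v. grad x \<bullet> v)) (at x)) \<and>
        (\<forall>x y. h y \<le> h x + grad x \<bullet> (y - x) + L / 2 * (n (x - y))\<^sup>2))"

definition gen_filtr :: "'w measure \<Rightarrow> (nat \<Rightarrow> 'w \<Rightarrow> 'a::topological_space)
    \<Rightarrow> (nat \<Rightarrow> 'w \<Rightarrow> 'a) \<Rightarrow> nat \<Rightarrow> 'w measure" where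
  "gen_filtr M x w k = sigma (space M)
     ((\<Union>i\<in>{..k}. {x i -` B \<inter> space M | B. B \<in> sets borel})
      \<union> (\<Union>i\<in>{..<k}. {w i -` B \<inter> space M | B. B \<in> sets borel}))"

end

theory Submission
  imports Defs
begin

lemma isnD:
  assumes "is_norm n"
  shows "0 \<le> n x" "n x = 0 \<longleftrightarrow> x = 0" "n (c *\<^sub>R x) = \<bar>c\<bar> * n x" "n (x+y) \<le> n x + n y"
  using assms unfolding is_norm_def by auto

lemma isn_zero: "is_norm n \<Longrightarrow> n 0 = 0" using isnD(2) by blast

lemma isn_minus: assumes "is_norm n" shows "n (- x) = n x"
  using isnD(3)[OF assms, of "-1" x] by simp

lemma isn_sym: assumes "is_norm n" shows "n (x - y) = n (y - x)"
  using isn_minus[OF assms, of "x - y"] by simp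

lemma isn_diff: assumes "is_norm n" shows "n (x - y) \<le> n x + n y"
  using isnD(4)[OF assms, of x "-y"] isn_minus[OF assms, of y] by simp

lemma isn_tri3: assumes "is_norm n" shows "n (x - z) \<le> n (x - y) + n (y - z)"
  using isnD(4)[OF assms, of "x - y" "y - z"] by simp

lemma isn_rev: assumes "is_norm n" shows "\<bar>n x - n y\<bar> \<le> n (x - y)"
proof -
  have "n x \<le> n (x - y) + n y" using isnD(4)[OF assms, of "x-y" y] by simp
  moreover have "n y \<le> n (y - x) + n x" using isnD(4)[OF assms, of "y-x" x] by simp
  ultimately show ?thesis using isn_sym[OF assms, of x y] by linarith
qed

lemma isn_scale: assumes "is_norm n" "0 \<le> c" shows "n (c *\<^sub>R x) = c * n x"
  using isnD(3)[OF assms(1)] assms(2) by simp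

lemma isn_sum: assumes "is_norm n" "finite S" shows "n (sum f S) \<le> (\<Sum>i\<in>S. n (f i))"
  using assms(2)
proof (induction S rule: finite_induct)
  case empty then show ?case using isn_zero[OF assms(1)] by simp
next
  case (insert a S)
  then show ?case using isnD(4)[OF assms(1), of "f a" "sum f S"] by simp
qed

lemma isn_upper:
  fixes n :: "'a::euclidean_space \<Rightarrow> real"
  assumes "is_norm n"
  shows "\<exists>C>0. \<forall>x. n x \<le> C * norm x"
proof -
  define C where "C = (\<Sum>b\<in>Basis. n b) + 1"
  have Cpos: "C > 0" unfolding C_def using isnD(1)[OF assms] by (simp add: add_nonneg_pos sum_nonneg)
  have "n x \<le> C * norm x" for x
  proof -
    have "n x = n (\<Sum>b\<in>Basis. (x \<bullet> b) *\<^sub>R b)" by (simp add: euclidean_representation)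
    also have "\<dots> \<le> (\<Sum>b\<in>Basis. n ((x \<bullet> b) *\<^sub>R b))" by (rule isn_sum[OF assms]) simp
    also have "\<dots> = (\<Sum>b\<in>Basis. \<bar>x \<bullet> b\<bar> * n b)" using isnD(3)[OF assms] by simp
    also have "\<dots> \<le> (\<Sum>b\<in>Basis. norm x * n b)"
      by (rule sum_mono) (simp add: Basis_le_norm isnD(1)[OF assms] mult_right_mono)
    also have "\<dots> = norm x * (\<Sum>b\<in>Basis. n b)" by (simp add: sum_distrib_left)
    also have "\<dots> \<le> C * norm x" unfolding C_def by (simp add: algebra_simps)
    finally show ?thesis .
  qed
  then show ?thesis using Cpos by blast
qed

lemma isn_cont:
  fixes n :: "'a::euclidean_space \<Rightarrow> real"
  assumes "is_norm n"
  shows "continuous_on UNIV n"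
proof -
  obtain C where C: "C > 0" "\<And>x. n x \<le> C * norm x" using isn_upper[OF assms] by blast
  show ?thesis
  proof (rule continuous_on_iff[THEN iffD2], intro ballI allI impI)
    fix x e :: real
    fix xa :: 'a
    assume "e > 0"
    show "\<exists>d>0. \<forall>x'\<in>UNIV. dist x' xa < d \<longrightarrow> dist (n x') (n xa) < e"
    proof (intro exI[of _ "e / C"] conjI ballI impI)
      show "e / C > 0" using \<open>e>0\<close> C by simp
      fix x' assume "dist x' xa < e / C"
      have "dist (n x') (n xa) \<le> n (x' - xa)" using isn_rev[OF assms] by (simp add: dist_real_def)
      also have "\<dots> \<le> C * norm (x' - xa)" by (rule C(2))
      also have "\<dots> < C * (e / C)" using \<open>dist x' xa < e / C\<close> C(1) by (simp add: dist_norm pos_less_divide_eq mult.commute)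
      also have "\<dots> = e" using C by simp
      finally show "dist (n x') (n xa) < e" .
    qed
  qed
qed

lemma isn_lower:
  fixes n :: "'a::euclidean_space \<Rightarrow> real"
  assumes "is_norm n"
  shows "\<exists>c>0. \<forall>x. c * norm x \<le> n x"
proof -
  have "sphere (0::'a) 1 \<noteq> {}"
    using SOME_Basis[where 'a='a] norm_Basis[of "SOME b. b\<in>(Basis::'a set)"] SOME_Basis
    by (metis empty_iff mem_sphere_0)
  then obtain x0 where x0: "x0 \<in> sphere (0::'a) 1" "\<And>y. y \<in> sphere 0 1 \<Longrightarrow> n x0 \<le> n y"
    using continuous_attains_inf[OF compact_sphere _ continuous_on_subset[OF isn_cont[OF assms]]] by blast
  have "x0 \<noteq> 0" using x0(1) by auto
  then have pos: "n x0 > 0" using isnD(1,2)[OF assms, of x0] by auto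
  have "n x0 * norm x \<le> n x" for x
  proof (cases "x = 0")
    case True then show ?thesis by (simp add: isn_zero[OF assms])
  next
    case False
    have "n x0 \<le> n ((1 / norm x) *\<^sub>R x)" using x0(2)[of "(1 / norm x) *\<^sub>R x"] False by simp
    also have "\<dots> = n x / norm x" using isn_scale[OF assms, of "1/norm x" x] by simp
    finally show ?thesis using False by (simp add: field_simps)
  qed
  then show ?thesis using pos by blast
qed

lemma cvx_grad:
  fixes g :: "'a::real_normed_vector \<Rightarrow> real"
  assumes cv: "convex_on UNIV g" and dg: "(g has_derivative (\<lambda>v. D v)) (at a)"
  shows "g a + D (b - a) \<le> g b"
proof -
  define h where "h = b - a"
  have d1: "((\<lambda>t::real. a + t *\<^sub>R h) has_derivative (\<lambda>t. t *\<^sub>R h)) (at 0)"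
    by (auto intro!: derivative_eq_intros)
  have d2: "(g has_derivative D) (at (a + 0 *\<^sub>R h))" using dg by simp
  have lin: "linear D" using dg has_derivative_linear by blast
  have d3: "((\<lambda>t. g (a + t *\<^sub>R h)) has_derivative (\<lambda>t. D (t *\<^sub>R h))) (at 0)"
    using has_derivative_compose[OF d1 d2] by (simp add: o_def)
  have eq: "(\<lambda>t. D (t *\<^sub>R h)) = (*) (D h)"
    using linear_scale[OF lin] by (auto simp: mult.commute)
  have "((\<lambda>t. g (a + t *\<^sub>R h)) has_field_derivative D h) (at 0)"
    using d3 unfolding has_field_derivative_def eq .
  then have lim: "((\<lambda>s. (g (a + s *\<^sub>R h) - g a) / s) \<longlongrightarrow> D h) (at 0)"
    unfolding DERIV_def by simp
  have lim2: "((\<lambda>s. (g (a + s *\<^sub>R h) - g a) / s) \<longlongrightarrow> D h) (at_right 0)"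
    by (rule tendsto_mono[OF at_le[OF subset_UNIV] lim])
  have ev: "eventually (\<lambda>s. (g (a + s *\<^sub>R h) - g a) / s \<le> g b - g a) (at_right (0::real))"
    unfolding eventually_at_right[of 0 "1::real", simplified]
  proof (intro exI[of _ 1] conjI allI impI)
    fix s :: real assume s: "0 < s" "s < 1"
    have "g ((1 - s) *\<^sub>R a + s *\<^sub>R b) \<le> (1 - s) * g a + s * g b"
      using convex_onD[OF cv, of s a b] s by simp
    moreover have "(1 - s) *\<^sub>R a + s *\<^sub>R b = a + s *\<^sub>R h" by (simp add: h_def algebra_simps)
    ultimately have "g (a + s *\<^sub>R h) - g a \<le> s * (g b - g a)" by (simp add: algebra_simps)
    then show "(g (a + s *\<^sub>R h) - g a) / s \<le> g b - g a" using s by (simp add: divide_le_eq mult.commute)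
  qed simp
  have "D h \<le> g b - g a"
    by (rule tendsto_le[OF trivial_limit_at_right_real tendsto_const lim2 ev])
  then show ?thesis unfolding h_def by simp
qed

lemma le_limit:
  fixes a b c :: real
  assumes "\<And>t. 0 < t \<Longrightarrow> t < 1 \<Longrightarrow> a \<le> b + t * c"
  shows "a \<le> b"
proof (rule ccontr)
  assume "\<not> a \<le> b"
  define t where "t = min (1/2) ((a - b) / (2 * (\<bar>c\<bar> + 1)))"
  have t0: "t > 0" using \<open>\<not> a \<le> b\<close> unfolding t_def by simp
  have t1: "t < 1" unfolding t_def by simp
  have "t * c \<le> t * \<bar>c\<bar>" using t0 by (simp add: mult_left_mono)
  also have "\<dots> \<le> ((a - b) / (2 * (\<bar>c\<bar> + 1))) * \<bar>c\<bar>"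
    by (rule mult_right_mono) (auto simp: t_def)
  also have "\<dots> < (a - b)"
  proof -
    have "((a - b) / (2 * (\<bar>c\<bar> + 1))) * \<bar>c\<bar> = (a - b) * (\<bar>c\<bar> / (2 * (\<bar>c\<bar> + 1)))" by simp
    also have "\<dots> < (a - b) * 1"
      using \<open>\<not> a \<le> b\<close> by (intro mult_strict_left_mono) (auto simp: field_simps)
    finally show ?thesis by simp
  qed
  finally show False using assms[OF t0 t1] by linarith
qed

lemma two_var_ineq:
  fixes p q r b :: real
  assumes "0 \<le> p" "0 \<le> q" "0 \<le> r" "r \<le> p + q" "b > 0"
  shows "r\<^sup>2 * (b / (1 + b)) \<le> p\<^sup>2 + b * q\<^sup>2"
proof -
  have "r\<^sup>2 \<le> (p + q)\<^sup>2" using assms by (simp add: power_mono)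
  moreover have "(p + q)\<^sup>2 * b \<le> (1 + b) * (p\<^sup>2 + b * q\<^sup>2)"
  proof -
    have "(1 + b) * (p\<^sup>2 + b * q\<^sup>2) - (p + q)\<^sup>2 * b = (p - b * q)\<^sup>2" by (simp add: power2_eq_square algebra_simps)
    then show ?thesis by (smt (verit) zero_le_power2)
  qed
  ultimately have "r\<^sup>2 * b \<le> (1 + b) * (p\<^sup>2 + b * q\<^sup>2)" using assms(5)
    by (smt (verit) mult_right_mono)
  then show ?thesis using assms(5) by (simp add: field_simps)
qed

locale env =
  fixes nc ns :: "'a::euclidean_space \<Rightarrow> real" and \<mu> L lcs ucs :: real and grad :: "'a \<Rightarrow> 'a"
  assumes nc_norm: "is_norm nc" and ns_norm: "is_norm ns" and mu: "\<mu> > 0"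
    and cvx: "convex_on UNIV (\<lambda>u. (ns u)\<^sup>2 / 2)"
    and gd: "\<And>x. ((\<lambda>u. (ns u)\<^sup>2 / 2) has_derivative (\<lambda>v. grad x \<bullet> v)) (at x)"
    and sm: "\<And>x y. (ns y)\<^sup>2 / 2 \<le> (ns x)\<^sup>2 / 2 + grad x \<bullet> (y - x) + L / 2 * (ns (x - y))\<^sup>2"
    and eqv: "\<And>u. lcs * nc u \<le> ns u \<and> ns u \<le> ucs * nc u"
    and lcs: "lcs > 0" and ucs: "ucs > 0"
begin

definition P where "P z u = (nc u)\<^sup>2 / 2 + (ns (z - u))\<^sup>2 / (2 * \<mu>)"
definition um where "um z = (SOME u. \<forall>v. P z u \<le> P z v)"
definition Me where "Me z = P z (um z)"
definition dd where "dd z = (1 / \<mu>) *\<^sub>R grad (z - um z)"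

lemma P_min_ex: "\<exists>u. \<forall>v. P z u \<le> P z v"
proof -
  obtain c where c: "c > 0" "\<And>x. c * norm x \<le> nc x" using isn_lower[OF nc_norm] by blast
  have cont: "continuous_on UNIV (P z)"
  proof -
    have "continuous_on UNIV (\<lambda>u. nc u)" by (rule isn_cont[OF nc_norm])
    moreover have "continuous_on UNIV (\<lambda>u. ns (z - u))"
      by (rule continuous_on_compose2[OF isn_cont[OF ns_norm]]) (auto intro!: continuous_intros)
    ultimately show ?thesis unfolding P_def[abs_def] using mu by (auto intro!: continuous_intros)
  qed
  have P0: "P z 0 \<ge> 0" unfolding P_def using mu by simp
  define R where "R = sqrt (2 * P z 0) / c"
  have R0: "R \<ge> 0" unfolding R_def using P0 c by simp
  obtain u0 where u0: "u0 \<in> cball 0 R" "\<And>y. y \<in> cball 0 R \<Longrightarrow> P z u0 \<le> P z y"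
    using continuous_attains_inf[OF compact_cball _ continuous_on_subset[OF cont subset_UNIV]] R0
    by (metis cball_eq_empty not_less)
  have "P z u0 \<le> P z v" for v
  proof (cases "v \<in> cball 0 R")
    case True then show ?thesis using u0 by blast
  next
    case False
    then have "norm v > R" by simp
    then have "nc v > c * R" using c by (smt (verit) mult_strict_left_mono)
    moreover have "c * R = sqrt (2 * P z 0)" unfolding R_def using c by simp
    ultimately have "(nc v)\<^sup>2 > 2 * P z 0"
      using P0 by (smt (verit) real_sqrt_ge_zero real_sqrt_pow2 power_strict_mono zero_less_numeral)
    moreover have "P z v \<ge> (nc v)\<^sup>2 / 2" unfolding P_def using mu by simp
    moreover have "P z u0 \<le> P z 0" using u0(2)[of 0] R0 by simp
    ultimately show ?thesis by simp
  qed
  then show ?thesis by blast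
qed

lemma P_um: "P z (um z) \<le> P z v"
  using someI_ex[OF P_min_ex[of z]] unfolding um_def by blast

lemma Me_le: "Me z \<le> P z v" unfolding Me_def by (rule P_um)

lemma Me_nonneg: "Me z \<ge> 0" unfolding Me_def P_def using mu by simp

lemma Me_lower: "(nc z)\<^sup>2 / (2 * (1 + \<mu> / lcs\<^sup>2)) \<le> Me z"
proof -
  define u where "u = um z"
  define b where "b = lcs\<^sup>2 / \<mu>"
  have b: "b > 0" unfolding b_def using lcs mu by simp
  have p: "0 \<le> nc u" "0 \<le> nc (z - u)" "0 \<le> nc z" using isnD(1)[OF nc_norm] by auto
  have tri: "nc z \<le> nc u + nc (z - u)" using isnD(4)[OF nc_norm, of u "z - u"] by simp
  have i1: "(nc z)\<^sup>2 * (b / (1 + b)) \<le> (nc u)\<^sup>2 + b * (nc (z - u))\<^sup>2"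
    by (rule two_var_ineq[OF p(1,2,3) tri b])
  have i2: "b * (nc (z - u))\<^sup>2 = (lcs * nc (z - u))\<^sup>2 / \<mu>" unfolding b_def by (simp add: power_mult_distrib)
  have i3: "(lcs * nc (z - u))\<^sup>2 / \<mu> \<le> (ns (z - u))\<^sup>2 / \<mu>"
    using eqv[of "z - u"] lcs p mu by (intro divide_right_mono power_mono) auto
  have "(nc z)\<^sup>2 * (b / (1 + b)) \<le> (nc u)\<^sup>2 + (ns (z - u))\<^sup>2 / \<mu>" using i1 i2 i3 by linarith
  then have "(nc z)\<^sup>2 * (b / (1 + b)) / 2 \<le> ((nc u)\<^sup>2 + (ns (z - u))\<^sup>2 / \<mu>) / 2" by (rule divide_right_mono) simp
  also have "\<dots> = Me z" unfolding Me_def P_def u_def by (simp add: field_simps)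
  finally have "(nc z)\<^sup>2 * (b / (1 + b)) / 2 \<le> Me z" .
  moreover have "(nc z)\<^sup>2 * (b / (1 + b)) / 2 = (nc z)\<^sup>2 / (2 * (1 + \<mu> / lcs\<^sup>2))"
    unfolding b_def using lcs mu by (simp add: field_simps)
  ultimately show ?thesis by simp
qed

lemma Me_upper: "Me z \<le> (nc z)\<^sup>2 / (2 * (1 + \<mu> / ucs\<^sup>2))"
proof -
  define b where "b = ucs\<^sup>2 / \<mu>"
  have b: "b > 0" unfolding b_def using ucs mu by simp
  define t where "t = b / (1 + b)"
  have t: "0 \<le> t" "t \<le> 1" "1 - t = 1 / (1 + b)" unfolding t_def using b by (auto simp: field_simps)
  have "Me z \<le> P z (t *\<^sub>R z)" by (rule Me_le)
  also have "\<dots> = (t * nc z)\<^sup>2 / 2 + (ns ((1 - t) *\<^sub>R z))\<^sup>2 / (2 * \<mu>)"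
    unfolding P_def using isn_scale[OF nc_norm t(1)] by (simp add: algebra_simps)
  also have "\<dots> \<le> (t * nc z)\<^sup>2 / 2 + (ucs * ((1 - t) * nc z))\<^sup>2 / (2 * \<mu>)"
  proof -
    have "ns ((1 - t) *\<^sub>R z) \<le> ucs * nc ((1 - t) *\<^sub>R z)" using eqv by blast
    also have "nc ((1 - t) *\<^sub>R z) = (1 - t) * nc z" by (rule isn_scale[OF nc_norm]) (use t(2) in simp)
    finally have "ns ((1 - t) *\<^sub>R z) \<le> ucs * ((1 - t) * nc z)" .
    moreover have "0 \<le> ns ((1 - t) *\<^sub>R z)" using isnD(1)[OF ns_norm] by simp
    ultimately show ?thesis using mu by (simp add: power_mono divide_right_mono)
  qed
  also have "\<dots> = (nc z)\<^sup>2 / 2 * (t\<^sup>2 + b * (1 - t)\<^sup>2)"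
    unfolding b_def using mu by (simp add: field_simps power_mult_distrib power2_eq_square)
  also have "t\<^sup>2 + b * (1 - t)\<^sup>2 = b / (1 + b)"
  proof -
    have "1 + b > 0" using b by simp
    have "t\<^sup>2 + b * (1 - t)\<^sup>2 = (b * b + b) / ((1 + b) * (1 + b))"
      unfolding t(3) unfolding t_def using \<open>1 + b > 0\<close> by (simp add: power2_eq_square add_divide_distrib)
    also have "\<dots> = (b * (1 + b)) / ((1 + b) * (1 + b))" by (simp add: algebra_simps)
    also have "\<dots> = b / (1 + b)" using \<open>1 + b > 0\<close> by (rule nonzero_mult_divide_mult_cancel_right[OF less_imp_neq[symmetric]])
    finally show ?thesis .
  qed
  also have "(nc z)\<^sup>2 / 2 * (b / (1 + b)) = (nc z)\<^sup>2 / (2 * (1 + \<mu> / ucs\<^sup>2))"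
    unfolding b_def using ucs mu by (simp add: field_simps)
  finally show ?thesis .
qed

lemma P_scale: "P (t *\<^sub>R z) (t *\<^sub>R u) = t\<^sup>2 * P z u"
proof -
  have "t *\<^sub>R z - t *\<^sub>R u = t *\<^sub>R (z - u)" by (simp add: algebra_simps)
  then have "ns (t *\<^sub>R z - t *\<^sub>R u) = \<bar>t\<bar> * ns (z - u)" using isnD(3)[OF ns_norm] by metis
  moreover have "nc (t *\<^sub>R u) = \<bar>t\<bar> * nc u" using isnD(3)[OF nc_norm] by metis
  ultimately show ?thesis unfolding P_def
    by (simp add: power_mult_distrib add_divide_distrib distrib_left)
qed

lemma Me_scale: "Me (t *\<^sub>R z) \<le> t\<^sup>2 * Me z"
  using Me_le[of "t *\<^sub>R z" "t *\<^sub>R um z"] unfolding P_scale Me_def .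

lemma Me_scale_ge: assumes "t \<noteq> 0" shows "t\<^sup>2 * Me z \<le> Me (t *\<^sub>R z)"
proof -
  have "Me z = Me ((1/t) *\<^sub>R (t *\<^sub>R z))" using assms by simp
  also have "\<dots> \<le> (1/t)\<^sup>2 * Me (t *\<^sub>R z)" by (rule Me_scale)
  then have "Me z \<le> Me (t *\<^sub>R z) / (t * t)" using assms by (simp add: power2_eq_square)
  moreover have tt: "t * t > 0" using assms not_real_square_gt_zero by blast
  ultimately show ?thesis using pos_le_divide_eq[OF tt] by (simp add: power2_eq_square mult.commute)
qed

lemma nc_sq_conv: "(nc ((1 - t) *\<^sub>R a + t *\<^sub>R b))\<^sup>2 / 2 \<le> (1 - t) * ((nc a)\<^sup>2 / 2) + t * ((nc b)\<^sup>2 / 2)"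
  if "0 \<le> t" "t \<le> 1" for a b t
proof -
  have "nc ((1 - t) *\<^sub>R a + t *\<^sub>R b) \<le> (1 - t) * nc a + t * nc b"
    using isnD(4)[OF nc_norm] isn_scale[OF nc_norm] that by (smt (verit))
  then have "(nc ((1 - t) *\<^sub>R a + t *\<^sub>R b))\<^sup>2 \<le> ((1 - t) * nc a + t * nc b)\<^sup>2"
    using isnD(1)[OF nc_norm] by (simp add: power_mono)
  also have "\<dots> \<le> (1 - t) * (nc a)\<^sup>2 + t * (nc b)\<^sup>2"
  proof -
    have "(1 - t) * (nc a)\<^sup>2 + t * (nc b)\<^sup>2 - ((1 - t) * nc a + t * nc b)\<^sup>2 = t * (1 - t) * (nc a - nc b)\<^sup>2"
      by (simp add: power2_eq_square algebra_simps)
    moreover have "t * (1 - t) * (nc a - nc b)\<^sup>2 \<ge> 0" using that by simp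
    ultimately show ?thesis by linarith
  qed
  finally show ?thesis by simp
qed

lemma dd_inner: "dd z \<bullet> v = (grad (z - um z) \<bullet> v) / \<mu>"
  unfolding dd_def by simp

lemma Me_descent: "Me y \<le> Me z + dd z \<bullet> (y - z) + L / (2 * \<mu>) * (ns (y - z))\<^sup>2"
proof -
  define u0 where "u0 = um z"
  have s: "(ns (y - u0))\<^sup>2 / 2 \<le> (ns (z - u0))\<^sup>2 / 2 + grad (z - u0) \<bullet> (y - z) + L / 2 * (ns (y - z))\<^sup>2"
    using sm[where x="z - u0" and y="y - u0"] isn_sym[OF ns_norm, of z y] by simp
  have s2: "((ns (y - u0))\<^sup>2 / 2) / \<mu> \<le> ((ns (z - u0))\<^sup>2 / 2 + grad (z - u0) \<bullet> (y - z) + L / 2 * (ns (y - z))\<^sup>2) / \<mu>"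
    by (rule divide_right_mono[OF s]) (use mu in simp)
  have "Me y \<le> P y u0" by (rule Me_le)
  also have "\<dots> = (nc u0)\<^sup>2 / 2 + ((ns (y - u0))\<^sup>2 / 2) / \<mu>" unfolding P_def by simp
  finally have "Me y \<le> (nc u0)\<^sup>2 / 2 + ((ns (z - u0))\<^sup>2 / 2 + grad (z - u0) \<bullet> (y - z) + L / 2 * (ns (y - z))\<^sup>2) / \<mu>"
    using s2 by linarith
  also have "\<dots> = Me z + dd z \<bullet> (y - z) + L / (2 * \<mu>) * (ns (y - z))\<^sup>2"
    unfolding Me_def P_def dd_inner u0_def using mu by (simp add: field_simps)
  finally show ?thesis .
qed

lemma opt_cond: "(nc (um z))\<^sup>2 / 2 + dd z \<bullet> (v - um z) \<le> (nc v)\<^sup>2 / 2"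
proof -
  define u0 where "u0 = um z"
  define h where "h = v - u0"
  define G where "G = grad (z - u0)"
  define C where "C = L / (2 * \<mu>) * (ns h)\<^sup>2"
  let ?f = "\<lambda>u. (nc u)\<^sup>2 / 2" and ?g = "\<lambda>u. (ns u)\<^sup>2 / 2"
  have "?f u0 + (G \<bullet> h) / \<mu> \<le> ?f v + t * C" if t: "0 < t" "t < 1" for t
  proof -
    have "P z u0 \<le> P z (u0 + t *\<^sub>R h)" unfolding u0_def by (rule P_um)
    moreover have "?f (u0 + t *\<^sub>R h) \<le> (1 - t) * ?f u0 + t * ?f v"
    proof -
      have "u0 + t *\<^sub>R h = (1 - t) *\<^sub>R u0 + t *\<^sub>R v" unfolding h_def by (simp add: algebra_simps)
      then show ?thesis using nc_sq_conv[of t u0 v] t by simp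
    qed
    moreover have "?g (z - (u0 + t *\<^sub>R h)) \<le> ?g (z - u0) - t * (G \<bullet> h) + L / 2 * (t\<^sup>2 * (ns h)\<^sup>2)"
    proof -
      have "?g (z - (u0 + t *\<^sub>R h)) \<le> ?g (z - u0) + G \<bullet> ((z - (u0 + t *\<^sub>R h)) - (z - u0)) + L / 2 * (ns ((z - u0) - (z - (u0 + t *\<^sub>R h))))\<^sup>2"
        unfolding G_def by (rule sm)
      moreover have "(z - (u0 + t *\<^sub>R h)) - (z - u0) = - (t *\<^sub>R h)" by simp
      moreover have "(z - u0) - (z - (u0 + t *\<^sub>R h)) = t *\<^sub>R h" by simp
      moreover have "ns (t *\<^sub>R h) = t * ns h" using isn_scale[OF ns_norm] t by simp
      ultimately show ?thesis by (simp add: power_mult_distrib)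
    qed
    ultimately have "?f u0 + ?g (z - u0) / \<mu> \<le> (1 - t) * ?f u0 + t * ?f v + (?g (z - u0) - t * (G \<bullet> h) + L / 2 * (t\<^sup>2 * (ns h)\<^sup>2)) / \<mu>"
    proof -
      assume a1: "P z u0 \<le> P z (u0 + t *\<^sub>R h)"
        and a2: "?f (u0 + t *\<^sub>R h) \<le> (1 - t) * ?f u0 + t * ?f v"
        and a3: "?g (z - (u0 + t *\<^sub>R h)) \<le> ?g (z - u0) - t * (G \<bullet> h) + L / 2 * (t\<^sup>2 * (ns h)\<^sup>2)"
      have e: "\<And>w x. P w x = ?f x + ?g (w - x) / \<mu>" unfolding P_def by simp
      have "?g (z - (u0 + t *\<^sub>R h)) / \<mu> \<le> (?g (z - u0) - t * (G \<bullet> h) + L / 2 * (t\<^sup>2 * (ns h)\<^sup>2)) / \<mu>"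
        by (rule divide_right_mono[OF a3]) (use mu in simp)
      then show ?thesis using a1 a2 unfolding e by linarith
    qed
    then have "t * (?f u0 + (G \<bullet> h) / \<mu>) \<le> t * (?f v + t * C)"
      unfolding C_def using mu by (simp add: field_simps power2_eq_square)
    then show ?thesis using t by simp
  qed
  then have "?f u0 + (G \<bullet> h) / \<mu> \<le> ?f v" by (rule le_limit)
  then show ?thesis unfolding dd_inner u0_def G_def h_def .
qed

lemma Me_subgrad: "Me z + dd z \<bullet> (y - z) \<le> Me y"
proof -
  define u0 where "u0 = um z"
  define u where "u = um y"
  have a: "(nc u0)\<^sup>2 / 2 + dd z \<bullet> (u - u0) \<le> (nc u)\<^sup>2 / 2" unfolding u0_def by (rule opt_cond)
  have b: "(ns (z - u0))\<^sup>2 / 2 + grad (z - u0) \<bullet> ((y - u) - (z - u0)) \<le> (ns (y - u))\<^sup>2 / 2"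
    by (rule cvx_grad[OF cvx gd])
  have b': "(ns (z - u0))\<^sup>2 / (2 * \<mu>) + dd z \<bullet> ((y - u) - (z - u0)) \<le> (ns (y - u))\<^sup>2 / (2 * \<mu>)"
  proof -
    have "((ns (z - u0))\<^sup>2 / 2 + grad (z - u0) \<bullet> ((y - u) - (z - u0))) / \<mu> \<le> ((ns (y - u))\<^sup>2 / 2) / \<mu>"
      by (rule divide_right_mono[OF b]) (use mu in simp)
    then show ?thesis unfolding dd_inner u0_def using mu by (simp add: field_simps)
  qed
  have "dd z \<bullet> (u - u0) + dd z \<bullet> ((y - u) - (z - u0)) = dd z \<bullet> (y - z)"
    by (simp add: inner_diff_right inner_add_right)
  then have "Me z + dd z \<bullet> (y - z) \<le> P y u"
    using a b' unfolding Me_def P_def u0_def by linarith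
  then show ?thesis unfolding Me_def u_def .
qed

end

context env
begin

lemma dd_z_le: "dd z \<bullet> z \<le> 2 * Me z"
proof -
  define C where "C = L / (2 * \<mu>) * (ns z)\<^sup>2"
  have "dd z \<bullet> z \<le> 2 * Me z + s * (C - Me z)" if s: "0 < s" "s < 1" for s
  proof -
    have "Me ((1 - s) *\<^sub>R z) \<le> Me z + dd z \<bullet> ((1 - s) *\<^sub>R z - z) + L / (2 * \<mu>) * (ns ((1 - s) *\<^sub>R z - z))\<^sup>2"
      by (rule Me_descent)
    moreover have "(1 - s) *\<^sub>R z - z = (- s) *\<^sub>R z" by (simp add: algebra_simps)
    moreover have "ns ((- s) *\<^sub>R z) = s * ns z" using isnD(3)[OF ns_norm, of "-s" z] s by simp
    moreover have "(1 - s)\<^sup>2 * Me z \<le> Me ((1 - s) *\<^sub>R z)" by (rule Me_scale_ge) (use s in simp)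
    ultimately have "(1 - s)\<^sup>2 * Me z \<le> Me z - s * (dd z \<bullet> z) + s\<^sup>2 * C"
      unfolding C_def by (simp add: power_mult_distrib algebra_simps)
    then have "s * (dd z \<bullet> z) \<le> s * (2 * Me z + s * (C - Me z))"
      by (simp add: power2_eq_square algebra_simps)
    then show ?thesis using s by simp
  qed
  then show ?thesis by (rule le_limit)
qed

lemma dd_z_ge: "2 * Me z \<le> dd z \<bullet> z"
proof -
  have "2 * Me z \<le> dd z \<bullet> z + s * Me z" if s: "0 < s" "s < 1" for s
  proof -
    have "Me z + dd z \<bullet> ((1 - s) *\<^sub>R z - z) \<le> Me ((1 - s) *\<^sub>R z)" by (rule Me_subgrad)
    moreover have "(1 - s) *\<^sub>R z - z = (- s) *\<^sub>R z" by (simp add: algebra_simps)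
    moreover have "Me ((1 - s) *\<^sub>R z) \<le> (1 - s)\<^sup>2 * Me z" by (rule Me_scale)
    ultimately have "Me z - s * (dd z \<bullet> z) \<le> (1 - s)\<^sup>2 * Me z" by simp
    then have "s * (2 * Me z) \<le> s * (dd z \<bullet> z + s * Me z)"
      by (simp add: power2_eq_square algebra_simps)
    then show ?thesis using s by simp
  qed
  then show ?thesis by (rule le_limit)
qed

lemma dd_bound: assumes "s > 0" shows "s * (dd z \<bullet> y) \<le> s\<^sup>2 * Me y + Me z"
proof -
  have "Me z + dd z \<bullet> (s *\<^sub>R y - z) \<le> Me (s *\<^sub>R y)" by (rule Me_subgrad)
  moreover have "Me (s *\<^sub>R y) \<le> s\<^sup>2 * Me y" by (rule Me_scale)
  moreover have "dd z \<bullet> z \<le> 2 * Me z" by (rule dd_z_le)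
  ultimately show ?thesis by (simp add: inner_diff_right)
qed

lemma L_ge1: "L \<ge> 1"
proof -
  obtain b :: 'a where b: "b \<in> Basis" using nonempty_Basis by blast
  then have "b \<noteq> 0" by auto
  then have nb: "ns b > 0" using isnD(1,2)[OF ns_norm, of b] by auto
  have "(ns b)\<^sup>2 / 2 \<le> (ns 0)\<^sup>2 / 2 + grad 0 \<bullet> (b - 0) + L / 2 * (ns (0 - b))\<^sup>2" by (rule sm)
  moreover have "(ns (-b))\<^sup>2 / 2 \<le> (ns 0)\<^sup>2 / 2 + grad 0 \<bullet> (-b - 0) + L / 2 * (ns (0 - (-b)))\<^sup>2" by (rule sm)
  ultimately have "(ns b)\<^sup>2 \<le> L * (ns b)\<^sup>2"
    using isn_minus[OF ns_norm, of b] isn_zero[OF ns_norm] by simp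
  then show ?thesis using nb by simp
qed

lemma Me_cont: "continuous_on UNIV Me"
proof (rule continuous_at_imp_continuous_on, intro ballI)
  fix z :: 'a
  have cns: "isCont ns 0" using isn_cont[OF ns_norm] continuous_on_eq_continuous_at[OF open_UNIV] by blast
  have l1: "((\<lambda>y. Me z + dd z \<bullet> (y - z)) \<longlongrightarrow> Me z) (at z)"
  proof -
    have "((\<lambda>y. Me z + dd z \<bullet> (y - z)) \<longlongrightarrow> Me z + dd z \<bullet> (z - z)) (at z)"
      by (intro tendsto_intros)
    then show ?thesis by simp
  qed
  have l2: "((\<lambda>y. Me z + dd z \<bullet> (y - z) + L / (2 * \<mu>) * (ns (y - z))\<^sup>2) \<longlongrightarrow> Me z) (at z)"
  proof -
    have "((\<lambda>y. y - z) \<longlongrightarrow> 0) (at z)"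
      using tendsto_diff[OF tendsto_ident_at[of z UNIV] tendsto_const[of z]] by simp
    then have l0: "((\<lambda>y. dd z \<bullet> (y - z)) \<longlongrightarrow> 0) (at z)"
      using tendsto_inner[OF tendsto_const[of "dd z"]] by fastforce
    have "((\<lambda>y. y - z) \<longlongrightarrow> 0) (at z)"
      using tendsto_diff[OF tendsto_ident_at[of z UNIV] tendsto_const[of z]] by simp
    then have "((\<lambda>y. ns (y - z)) \<longlongrightarrow> ns 0) (at z)" by (rule isCont_tendsto_compose[OF cns])
    then have "((\<lambda>y. ns (y - z)) \<longlongrightarrow> 0) (at z)" using isn_zero[OF ns_norm] by simp
    then have "((\<lambda>y. Me z + dd z \<bullet> (y - z) + L / (2 * \<mu>) * (ns (y - z))\<^sup>2) \<longlongrightarrow> Me z + 0 + L / (2 * \<mu>) * 0\<^sup>2) (at z)"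
      using l0 by (intro tendsto_intros) simp_all
    then show ?thesis by simp
  qed
  have "(Me \<longlongrightarrow> Me z) (at z)"
    by (rule tendsto_sandwich[OF _ _ l1 l2]) (intro always_eventually allI Me_subgrad Me_descent)+
  then show "isCont Me z" unfolding isCont_def .
qed

lemma Me_meas[measurable]: "Me \<in> borel_measurable borel"
  using Me_cont by (rule borel_measurable_continuous_onI)

lemma dd_meas: "(\<lambda>z. dd z \<bullet> b) \<in> borel_measurable borel"
proof (rule borel_measurable_LIMSEQ_real)
  fix z :: 'a
  define C where "C = L / (2 * \<mu>) * (ns b)\<^sup>2"
  let ?u = "\<lambda>n. real n * (Me (z + (1 / real n) *\<^sub>R b) - Me z)"
  show "(\<lambda>n. ?u n) \<longlonglongrightarrow> dd z \<bullet> b"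
  proof (rule tendsto_sandwich[of "\<lambda>n. dd z \<bullet> b" _ _ "\<lambda>n. dd z \<bullet> b + (1 / real n) * C"])
    show "eventually (\<lambda>n. dd z \<bullet> b \<le> ?u n) sequentially"
      unfolding eventually_sequentially
    proof (intro exI[of _ 1] allI impI)
      fix n :: nat assume "1 \<le> n"
      then have n: "real n > 0" by simp
      have "Me z + dd z \<bullet> ((z + (1 / real n) *\<^sub>R b) - z) \<le> Me (z + (1 / real n) *\<^sub>R b)" by (rule Me_subgrad)
      then have "(1 / real n) * (dd z \<bullet> b) \<le> Me (z + (1 / real n) *\<^sub>R b) - Me z" by simp
      then have "real n * ((1 / real n) * (dd z \<bullet> b)) \<le> real n * (Me (z + (1 / real n) *\<^sub>R b) - Me z)"
        using n by (simp only: mult_le_cancel_left_pos)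
      then show "dd z \<bullet> b \<le> ?u n" using n by simp
    qed
    show "eventually (\<lambda>n. ?u n \<le> dd z \<bullet> b + (1 / real n) * C) sequentially"
      unfolding eventually_sequentially
    proof (intro exI[of _ 1] allI impI)
      fix n :: nat assume "1 \<le> n"
      then have n: "real n > 0" by simp
      have "Me (z + (1 / real n) *\<^sub>R b) \<le> Me z + dd z \<bullet> ((z + (1 / real n) *\<^sub>R b) - z) + L / (2 * \<mu>) * (ns ((z + (1 / real n) *\<^sub>R b) - z))\<^sup>2"
        by (rule Me_descent)
      moreover have "ns ((1 / real n) *\<^sub>R b) = (1 / real n) * ns b" using isn_scale[OF ns_norm] n by simp
      ultimately have "Me (z + (1 / real n) *\<^sub>R b) - Me z \<le> (1 / real n) * (dd z \<bullet> b + (1 / real n) * C)"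
        unfolding C_def by (simp add: power_mult_distrib power2_eq_square algebra_simps)
      then have "real n * (Me (z + (1 / real n) *\<^sub>R b) - Me z) \<le> real n * ((1 / real n) * (dd z \<bullet> b + (1 / real n) * C))"
        using n by (simp only: mult_le_cancel_left_pos)
      then show "?u n \<le> dd z \<bullet> b + (1 / real n) * C" using n by simp
    qed
    show "(\<lambda>n. dd z \<bullet> b) \<longlonglongrightarrow> dd z \<bullet> b" by simp
    have "(\<lambda>n. dd z \<bullet> b + (1 / real n) * C) \<longlonglongrightarrow> dd z \<bullet> b + 0 * C"
      by (intro tendsto_intros)
    then show "(\<lambda>n. dd z \<bullet> b + (1 / real n) * C) \<longlonglongrightarrow> dd z \<bullet> b" by simp
  qed
next
  fix n :: nat
  show "(\<lambda>z. real n * (Me (z + (1 / real n) *\<^sub>R b) - Me z)) \<in> borel_measurable borel"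
    by measurable
qed

end

context env
begin

definition a1 where "a1 = (1 + \<mu> / lcs\<^sup>2) / (1 + \<mu> / ucs\<^sup>2)"

lemma a1_pos: "a1 > 0" unfolding a1_def using mu lcs ucs by (simp add: add_pos_pos)

lemma nc_Me: "(nc z)\<^sup>2 \<le> 2 * (1 + \<mu> / lcs\<^sup>2) * Me z"
proof -
  have p: "2 * (1 + \<mu> / lcs\<^sup>2) > 0" using mu lcs by (simp add: add_pos_pos)
  have "(nc z)\<^sup>2 / (2 * (1 + \<mu> / lcs\<^sup>2)) \<le> Me z" by (rule Me_lower)
  then show ?thesis using p by (simp add: pos_divide_le_eq mult.commute)
qed

lemma Me_contr: assumes "nc y \<le> \<gamma> * nc z" "0 \<le> \<gamma>" shows "Me y \<le> \<gamma>\<^sup>2 * a1 * Me z"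
proof -
  have p: "2 * (1 + \<mu> / ucs\<^sup>2) > 0" using mu ucs by (simp add: add_pos_pos)
  have "Me y \<le> (nc y)\<^sup>2 / (2 * (1 + \<mu> / ucs\<^sup>2))" by (rule Me_upper)
  also have "\<dots> \<le> (\<gamma> * nc z)\<^sup>2 / (2 * (1 + \<mu> / ucs\<^sup>2))"
    using assms isnD(1)[OF nc_norm, of y] p by (intro divide_right_mono power_mono) auto
  also have "\<dots> = \<gamma>\<^sup>2 * ((nc z)\<^sup>2 / (2 * (1 + \<mu> / ucs\<^sup>2)))" by (simp add: power_mult_distrib)
  also have "\<dots> \<le> \<gamma>\<^sup>2 * ((2 * (1 + \<mu> / lcs\<^sup>2) * Me z) / (2 * (1 + \<mu> / ucs\<^sup>2)))"
    using nc_Me[of z] p by (intro mult_left_mono divide_right_mono) auto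
  also have "\<dots> = \<gamma>\<^sup>2 * a1 * Me z"
  proof -
    have h: "2 * X * M / (2 * Y) = X / Y * M" for X Y M :: real by simp
    show ?thesis unfolding a1_def by (simp only: h)
  qed
  finally show ?thesis .
qed

lemma step_pt:
  fixes z y w :: 'a and \<epsilon> \<gamma> :: real
  assumes y: "nc y \<le> \<gamma> * nc z" and \<gamma>: "0 < \<gamma>" "\<gamma> \<le> 1" and \<epsilon>: "0 \<le> \<epsilon>"
  shows "Me (z + \<epsilon> *\<^sub>R ((y - z) + w)) \<le> (1 - 2 * (1 - \<gamma> * sqrt a1) * \<epsilon> + \<epsilon>\<^sup>2 * (L / \<mu>) * (8 * ucs\<^sup>2 * (1 + \<mu> / lcs\<^sup>2))) * Me z
       + \<epsilon> * (dd z \<bullet> w) + (L / \<mu>) * \<epsilon>\<^sup>2 * (ns w)\<^sup>2"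
proof -
  define v where "v = (y - z) + w"
  have L0: "L \<ge> 0" using L_ge1 by simp
  have M0: "Me z \<ge> 0" by (rule Me_nonneg)
  have d1: "Me (z + \<epsilon> *\<^sub>R v) \<le> Me z + dd z \<bullet> ((z + \<epsilon> *\<^sub>R v) - z) + L / (2 * \<mu>) * (ns ((z + \<epsilon> *\<^sub>R v) - z))\<^sup>2"
    by (rule Me_descent)
  have e1: "dd z \<bullet> ((z + \<epsilon> *\<^sub>R v) - z) = \<epsilon> * (dd z \<bullet> y) - \<epsilon> * (dd z \<bullet> z) + \<epsilon> * (dd z \<bullet> w)"
    unfolding v_def by (simp add: inner_diff_right inner_add_right algebra_simps)
  have e2: "ns ((z + \<epsilon> *\<^sub>R v) - z) = \<epsilon> * ns v" using isn_scale[OF ns_norm \<epsilon>] by simp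
  define s where "s = 1 / (\<gamma> * sqrt a1)"
  have sa: "\<gamma> * sqrt a1 > 0" using \<gamma> a1_pos by simp
  have s0: "s > 0" unfolding s_def using sa by simp
  have ss: "s\<^sup>2 * (\<gamma>\<^sup>2 * a1) = 1" unfolding s_def using sa a1_pos \<gamma>
    by (simp add: power_divide power_mult_distrib field_simps)
  have "s * (dd z \<bullet> y) \<le> s\<^sup>2 * Me y + Me z" by (rule dd_bound[OF s0])
  also have "s\<^sup>2 * Me y \<le> s\<^sup>2 * (\<gamma>\<^sup>2 * a1 * Me z)"
    using Me_contr[OF y less_imp_le[OF \<gamma>(1)]] by (simp add: mult_left_mono)
  finally have "s * (dd z \<bullet> y) \<le> 2 * Me z" using ss by (simp add: mult.assoc[symmetric])
  then have dy: "dd z \<bullet> y \<le> 2 * (\<gamma> * sqrt a1) * Me z"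
    using s0 sa unfolding s_def by (simp add: field_simps)
  have dz: "2 * Me z \<le> dd z \<bullet> z" by (rule dd_z_ge)
  have nyz: "ns (y - z) \<le> 2 * ucs * nc z"
  proof -
    have a: "ns (y - z) \<le> ucs * nc (y - z)" using eqv by blast
    have b: "nc (y - z) \<le> nc y + nc z" by (rule isn_diff[OF nc_norm])
    have c: "nc y + nc z \<le> 2 * nc z" using y \<gamma> isnD(1)[OF nc_norm, of z] mult_right_mono[of \<gamma> 1 "nc z"]
      by linarith
    have "ucs * nc (y - z) \<le> ucs * (2 * nc z)" using b c ucs by (intro mult_left_mono) auto
    then show ?thesis using a by simp
  qed
  have nyz2: "(ns (y - z))\<^sup>2 \<le> 8 * ucs\<^sup>2 * (1 + \<mu> / lcs\<^sup>2) * Me z"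
  proof -
    have "(ns (y - z))\<^sup>2 \<le> (2 * ucs * nc z)\<^sup>2" using nyz isnD(1)[OF ns_norm] by (simp add: power_mono)
    also have "\<dots> = 4 * ucs\<^sup>2 * (nc z)\<^sup>2" by (simp add: power_mult_distrib)
    also have "\<dots> \<le> 4 * ucs\<^sup>2 * (2 * (1 + \<mu> / lcs\<^sup>2) * Me z)" using nc_Me[of z] by (simp add: mult_left_mono)
    finally show ?thesis by (simp add: algebra_simps)
  qed
  have nv: "(ns v)\<^sup>2 \<le> 2 * (ns (y - z))\<^sup>2 + 2 * (ns w)\<^sup>2"
  proof -
    have "ns v \<le> ns (y - z) + ns w" unfolding v_def by (rule isnD(4)[OF ns_norm])
    then have "(ns v)\<^sup>2 \<le> (ns (y - z) + ns w)\<^sup>2" using isnD(1)[OF ns_norm] by (simp add: power_mono)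
    also have "\<dots> \<le> 2 * (ns (y - z))\<^sup>2 + 2 * (ns w)\<^sup>2"
      by (smt (verit) zero_le_power2 power2_diff power2_sum)
    finally show ?thesis .
  qed
  have q: "L / (2 * \<mu>) * (\<epsilon> * ns v)\<^sup>2 \<le> L / (2 * \<mu>) * \<epsilon>\<^sup>2 * (2 * (8 * ucs\<^sup>2 * (1 + \<mu> / lcs\<^sup>2) * Me z) + 2 * (ns w)\<^sup>2)"
  proof -
    have "(ns v)\<^sup>2 \<le> 2 * (8 * ucs\<^sup>2 * (1 + \<mu> / lcs\<^sup>2) * Me z) + 2 * (ns w)\<^sup>2" using nv nyz2 by linarith
    then have "\<epsilon>\<^sup>2 * (ns v)\<^sup>2 \<le> \<epsilon>\<^sup>2 * (2 * (8 * ucs\<^sup>2 * (1 + \<mu> / lcs\<^sup>2) * Me z) + 2 * (ns w)\<^sup>2)"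
      by (simp add: mult_left_mono)
    then have "L / (2 * \<mu>) * (\<epsilon>\<^sup>2 * (ns v)\<^sup>2) \<le> L / (2 * \<mu>) * (\<epsilon>\<^sup>2 * (2 * (8 * ucs\<^sup>2 * (1 + \<mu> / lcs\<^sup>2) * Me z) + 2 * (ns w)\<^sup>2))"
      by (rule mult_left_mono) (use L0 mu in auto)
    then show ?thesis by (simp add: power_mult_distrib mult.assoc)
  qed
  have "\<epsilon> * (dd z \<bullet> y) - \<epsilon> * (dd z \<bullet> z) \<le> \<epsilon> * (2 * (\<gamma> * sqrt a1) * Me z - 2 * Me z)"
    using dy dz \<epsilon> by (simp add: right_diff_distrib[symmetric] mult_left_mono)
  then have "Me (z + \<epsilon> *\<^sub>R v) \<le> Me z + \<epsilon> * (2 * (\<gamma> * sqrt a1) * Me z - 2 * Me z) + \<epsilon> * (dd z \<bullet> w)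
      + L / (2 * \<mu>) * \<epsilon>\<^sup>2 * (2 * (8 * ucs\<^sup>2 * (1 + \<mu> / lcs\<^sup>2) * Me z) + 2 * (ns w)\<^sup>2)"
    using d1[unfolded e1 e2] q by linarith
  also have "\<dots> = (1 - 2 * (1 - \<gamma> * sqrt a1) * \<epsilon> + \<epsilon>\<^sup>2 * (L / \<mu>) * (8 * ucs\<^sup>2 * (1 + \<mu> / lcs\<^sup>2))) * Me z
       + \<epsilon> * (dd z \<bullet> w) + (L / \<mu>) * \<epsilon>\<^sup>2 * (ns w)\<^sup>2"
    using mu by (simp add: field_simps)
  finally show ?thesis unfolding v_def .
qed

end

lemma isn_meas: fixes n :: "'a::euclidean_space \<Rightarrow> real" assumes "is_norm n"
  shows "n \<in> borel_measurable borel"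
  using isn_cont[OF assms] by (rule borel_measurable_continuous_onI)

context env
begin

lemma exp_step:
  fixes M F :: "'w measure" and X X' W :: "'w \<Rightarrow> 'a" and xstar :: 'a and H :: "'a \<Rightarrow> 'a"
    and ne :: "'a \<Rightarrow> real" and \<epsilon> \<gamma> A B les ues \<alpha>2 :: real
  assumes P: "prob_space M" and sub: "subalgebra M F"
    and Xm: "X \<in> borel_measurable F" and Wm: "W \<in> borel_measurable M"
    and X': "\<And>\<omega>. X' \<omega> = X \<omega> + \<epsilon> *\<^sub>R (H (X \<omega>) - X \<omega> + W \<omega>)"
    and contr: "\<And>u v. nc (H u - H v) \<le> \<gamma> * nc (u - v)" and fixpt: "H xstar = xstar"
    and \<gamma>: "0 < \<gamma>" "\<gamma> \<le> 1" and \<epsilon>: "0 \<le> \<epsilon>"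
    and Hm: "H \<in> borel_measurable borel"
    and ne_norm: "is_norm ne" and eqe: "\<And>u. les * ne u \<le> ns u \<and> ns u \<le> ues * ne u"
    and les: "les > 0" and ues: "ues > 0"
    and mean: "\<forall>b\<in>Basis. AE \<omega> in M. real_cond_exp M F (\<lambda>\<omega>. W \<omega> \<bullet> b) \<omega> = 0"
    and var: "AE \<omega> in M. nn_cond_exp M F (\<lambda>\<omega>. ennreal ((ne (W \<omega>))\<^sup>2)) \<omega> \<le> ennreal (A + B * (ne (X \<omega>))\<^sup>2)"
    and AB: "A \<ge> 0" "B \<ge> 0"
    and int: "integrable M (\<lambda>\<omega>. Me (X \<omega> - xstar))"
    and \<alpha>2: "\<alpha>2 = 1 - \<gamma> * sqrt a1"
  shows "integrable M (\<lambda>\<omega>. Me (X' \<omega> - xstar)) \<and>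
    (\<integral>\<omega>. Me (X' \<omega> - xstar) \<partial>M) \<le> (1 - 2 * \<alpha>2 * \<epsilon> + \<epsilon>\<^sup>2 * ((L / \<mu>) * (8 * ucs\<^sup>2 * (1 + \<mu> / lcs\<^sup>2)
        + 4 * B * ues\<^sup>2 * (ucs / les)\<^sup>2 * (1 + \<mu> / lcs\<^sup>2)))) * (\<integral>\<omega>. Me (X \<omega> - xstar) \<partial>M)
      + \<epsilon>\<^sup>2 * ((L / \<mu>) * ues\<^sup>2 * (A + 2 * B * (ucs / les)\<^sup>2 * (nc xstar)\<^sup>2))"
proof -
  interpret prob_space M by (rule P)
  interpret finite_measure_subalgebra M F
    by unfold_locales (rule sub)
  have [measurable]: "nc \<in> borel_measurable borel" "ns \<in> borel_measurable borel" "ne \<in> borel_measurable borel"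
    using isn_meas nc_norm ns_norm ne_norm by auto
  have [measurable]: "X \<in> borel_measurable M" by (rule measurable_from_subalg[OF sub Xm])
  note [measurable] = Wm Hm Me_meas
  define z where "z = (\<lambda>\<omega>. X \<omega> - xstar)"
  have zF: "z \<in> borel_measurable F" unfolding z_def using Xm by measurable
  have [measurable]: "z \<in> borel_measurable M" unfolding z_def by measurable
  define c1 where "c1 = 1 - 2 * (1 - \<gamma> * sqrt a1) * \<epsilon> + \<epsilon>\<^sup>2 * (L / \<mu>) * (8 * ucs\<^sup>2 * (1 + \<mu> / lcs\<^sup>2))"
  define R where "R = (\<lambda>\<omega>. c1 * Me (z \<omega>) + \<epsilon> * (\<Sum>b\<in>Basis. (dd (z \<omega>) \<bullet> b) * (W \<omega> \<bullet> b)) + (L / \<mu>) * \<epsilon>\<^sup>2 * (ns (W \<omega>))\<^sup>2)"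
  have pt: "Me (X' \<omega> - xstar) \<le> R \<omega>" for \<omega>
  proof -
    have e: "X' \<omega> - xstar = z \<omega> + \<epsilon> *\<^sub>R (((H (X \<omega>) - xstar) - z \<omega>) + W \<omega>)"
      unfolding X' z_def by (simp add: algebra_simps)
    have y: "nc (H (X \<omega>) - xstar) \<le> \<gamma> * nc (z \<omega>)" using contr[of "X \<omega>" xstar] fixpt unfolding z_def by simp
    have "dd (z \<omega>) \<bullet> W \<omega> = (\<Sum>b\<in>Basis. (dd (z \<omega>) \<bullet> b) * (W \<omega> \<bullet> b))" by (rule euclidean_inner)
    then show ?thesis using step_pt[OF y \<gamma> \<epsilon>, of "W \<omega>"] unfolding e R_def c1_def by simp
  qed
  have iMe: "integrable M (\<lambda>\<omega>. Me (z \<omega>))" using int unfolding z_def .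
  have inc: "integrable M (\<lambda>\<omega>. (nc (z \<omega>))\<^sup>2)"
  proof (rule Bochner_Integration.integrable_bound[OF integrable_mult_right[OF iMe, of "2 * (1 + \<mu> / lcs\<^sup>2)"]])
    show "(\<lambda>\<omega>. (nc (z \<omega>))\<^sup>2) \<in> borel_measurable M" by measurable
    show "AE \<omega> in M. norm ((nc (z \<omega>))\<^sup>2) \<le> norm (2 * (1 + \<mu> / lcs\<^sup>2) * Me (z \<omega>))"
      using nc_Me Me_nonneg mu lcs by (intro AE_I2) (simp add: abs_of_nonneg add_pos_pos)
  qed
  have nex: "(ne (X \<omega>))\<^sup>2 \<le> 2 * (ucs / les)\<^sup>2 * ((nc (z \<omega>))\<^sup>2 + (nc xstar)\<^sup>2)" for \<omega>
  proof -
    have "les * ne (X \<omega>) \<le> ucs * nc (X \<omega>)" using eqe[of "X \<omega>"] eqv[of "X \<omega>"] by linarith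
    then have a: "ne (X \<omega>) \<le> (ucs / les) * nc (X \<omega>)" using les by (simp add: field_simps)
    have "nc (X \<omega>) \<le> nc (z \<omega>) + nc xstar" using isnD(4)[OF nc_norm, of "z \<omega>" xstar] unfolding z_def by simp
    then have "ne (X \<omega>) \<le> (ucs / les) * (nc (z \<omega>) + nc xstar)"
      using a les ucs by (smt (verit) divide_pos_pos mult_left_mono)
    then have "(ne (X \<omega>))\<^sup>2 \<le> ((ucs / les) * (nc (z \<omega>) + nc xstar))\<^sup>2"
      using isnD(1)[OF ne_norm] by (simp add: power_mono)
    also have "\<dots> = (ucs / les)\<^sup>2 * (nc (z \<omega>) + nc xstar)\<^sup>2" by (rule power_mult_distrib)
    also have "\<dots> \<le> (ucs / les)\<^sup>2 * (2 * ((nc (z \<omega>))\<^sup>2 + (nc xstar)\<^sup>2))"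
      by (rule mult_left_mono) (smt (verit) zero_le_power2 power2_diff power2_sum, simp)
    finally show ?thesis by (simp add: algebra_simps)
  qed
  have inex: "integrable M (\<lambda>\<omega>. (ne (X \<omega>))\<^sup>2)"
  proof (rule Bochner_Integration.integrable_bound)
    show "integrable M (\<lambda>\<omega>. 2 * (ucs / les)\<^sup>2 * ((nc (z \<omega>))\<^sup>2 + (nc xstar)\<^sup>2))"
      using inc by (intro integrable_mult_right Bochner_Integration.integrable_add) auto
    show "(\<lambda>\<omega>. (ne (X \<omega>))\<^sup>2) \<in> borel_measurable M" by measurable
    show "AE \<omega> in M. norm ((ne (X \<omega>))\<^sup>2) \<le> norm (2 * (ucs / les)\<^sup>2 * ((nc (z \<omega>))\<^sup>2 + (nc xstar)\<^sup>2))"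
      using nex by (intro AE_I2) (simp add: abs_of_nonneg)
  qed
  have nnw: "(\<integral>\<^sup>+\<omega>. ennreal ((ne (W \<omega>))\<^sup>2) \<partial>M) \<le> ennreal (A + B * (\<integral>\<omega>. (ne (X \<omega>))\<^sup>2 \<partial>M))"
  proof -
    have "(\<integral>\<^sup>+\<omega>. ennreal ((ne (W \<omega>))\<^sup>2) \<partial>M) = (\<integral>\<^sup>+\<omega>. 1 * ennreal ((ne (W \<omega>))\<^sup>2) \<partial>M)" by simp
    also have "\<dots> = (\<integral>\<^sup>+\<omega>. 1 * nn_cond_exp M F (\<lambda>\<omega>. ennreal ((ne (W \<omega>))\<^sup>2)) \<omega> \<partial>M)"
      by (rule nn_cond_exp_intg[symmetric]) measurable
    also have "\<dots> \<le> (\<integral>\<^sup>+\<omega>. ennreal (A + B * (ne (X \<omega>))\<^sup>2) \<partial>M)"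
      using var by (intro nn_integral_mono_AE) auto
    also have "\<dots> = ennreal (\<integral>\<omega>. A + B * (ne (X \<omega>))\<^sup>2 \<partial>M)"
      using inex AB by (intro nn_integral_eq_integral) auto
    also have "(\<integral>\<omega>. A + B * (ne (X \<omega>))\<^sup>2 \<partial>M) = A + B * (\<integral>\<omega>. (ne (X \<omega>))\<^sup>2 \<partial>M)"
      using inex by (simp add: prob_space)
    finally show ?thesis .
  qed
  have inew: "integrable M (\<lambda>\<omega>. (ne (W \<omega>))\<^sup>2)"
    by (rule integrableI_nonneg) (use le_less_trans[OF nnw ennreal_less_top] in auto)
  have ew: "(\<integral>\<omega>. (ne (W \<omega>))\<^sup>2 \<partial>M) \<le> A + B * (\<integral>\<omega>. (ne (X \<omega>))\<^sup>2 \<partial>M)"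
  proof -
    have "ennreal (\<integral>\<omega>. (ne (W \<omega>))\<^sup>2 \<partial>M) = (\<integral>\<^sup>+\<omega>. ennreal ((ne (W \<omega>))\<^sup>2) \<partial>M)"
      using inew by (intro nn_integral_eq_integral[symmetric]) auto
    then have "ennreal (\<integral>\<omega>. (ne (W \<omega>))\<^sup>2 \<partial>M) \<le> ennreal (A + B * (\<integral>\<omega>. (ne (X \<omega>))\<^sup>2 \<partial>M))" using nnw by simp
    moreover have "0 \<le> A + B * (\<integral>\<omega>. (ne (X \<omega>))\<^sup>2 \<partial>M)" using AB by (simp add: integral_nonneg_AE)
    ultimately show ?thesis by (simp add: ennreal_le_iff)
  qed
  have insw: "integrable M (\<lambda>\<omega>. (ns (W \<omega>))\<^sup>2)"
  proof (rule Bochner_Integration.integrable_bound[OF integrable_mult_right[OF inew, of "ues\<^sup>2"]])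
    show "(\<lambda>\<omega>. (ns (W \<omega>))\<^sup>2) \<in> borel_measurable M" by measurable
    show "AE \<omega> in M. norm ((ns (W \<omega>))\<^sup>2) \<le> norm (ues\<^sup>2 * (ne (W \<omega>))\<^sup>2)"
    proof (intro AE_I2)
      fix \<omega>
      have "ns (W \<omega>) \<le> ues * ne (W \<omega>)" using eqe by blast
      then have "(ns (W \<omega>))\<^sup>2 \<le> (ues * ne (W \<omega>))\<^sup>2" using isnD(1)[OF ns_norm] by (simp add: power_mono)
      then show "norm ((ns (W \<omega>))\<^sup>2) \<le> norm (ues\<^sup>2 * (ne (W \<omega>))\<^sup>2)" by (simp add: power_mult_distrib)
    qed
  qed
  have esw: "(\<integral>\<omega>. (ns (W \<omega>))\<^sup>2 \<partial>M) \<le> ues\<^sup>2 * (\<integral>\<omega>. (ne (W \<omega>))\<^sup>2 \<partial>M)"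
  proof -
    have "(\<integral>\<omega>. (ns (W \<omega>))\<^sup>2 \<partial>M) \<le> (\<integral>\<omega>. ues\<^sup>2 * (ne (W \<omega>))\<^sup>2 \<partial>M)"
    proof (rule integral_mono[OF insw integrable_mult_right[OF inew]])
      fix \<omega>
      have "ns (W \<omega>) \<le> ues * ne (W \<omega>)" using eqe by blast
      then have "(ns (W \<omega>))\<^sup>2 \<le> (ues * ne (W \<omega>))\<^sup>2" using isnD(1)[OF ns_norm] by (simp add: power_mono)
      then show "(ns (W \<omega>))\<^sup>2 \<le> ues\<^sup>2 * (ne (W \<omega>))\<^sup>2" by (simp add: power_mult_distrib)
    qed
    then show ?thesis by simp
  qed
  obtain cw where cw: "cw > 0" "\<And>v. cw * norm v \<le> ne v" using isn_lower[OF ne_norm] by blast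
  have icross: "integrable M (\<lambda>\<omega>. (dd (z \<omega>) \<bullet> b) * (W \<omega> \<bullet> b))" and ecross: "(\<integral>\<omega>. (dd (z \<omega>) \<bullet> b) * (W \<omega> \<bullet> b) \<partial>M) = 0"
    if b: "b \<in> Basis" for b
  proof -
    have ddm: "(\<lambda>\<omega>. dd (z \<omega>) \<bullet> b) \<in> borel_measurable F"
      using measurable_compose[OF zF dd_meas[of b]] by (simp add: o_def)
    have [measurable]: "(\<lambda>\<omega>. dd (z \<omega>) \<bullet> b) \<in> borel_measurable M" by (rule measurable_from_subalg[OF sub ddm])
    have iwb: "integrable M (\<lambda>\<omega>. (W \<omega> \<bullet> b)\<^sup>2)"
    proof (rule Bochner_Integration.integrable_bound[OF integrable_mult_right[OF inew, of "1 / cw\<^sup>2"]])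
      show "(\<lambda>\<omega>. (W \<omega> \<bullet> b)\<^sup>2) \<in> borel_measurable M" by measurable
      show "AE \<omega> in M. norm ((W \<omega> \<bullet> b)\<^sup>2) \<le> norm (1 / cw\<^sup>2 * (ne (W \<omega>))\<^sup>2)"
      proof (intro AE_I2)
        fix \<omega>
        have "\<bar>W \<omega> \<bullet> b\<bar> \<le> norm (W \<omega>)" using b by (rule Basis_le_norm)
        also have "norm (W \<omega>) \<le> ne (W \<omega>) / cw" using cw by (simp add: field_simps mult.commute)
        finally have "(W \<omega> \<bullet> b)\<^sup>2 \<le> (ne (W \<omega>) / cw)\<^sup>2"
          by (metis abs_ge_zero power2_abs power_mono)
        then show "norm ((W \<omega> \<bullet> b)\<^sup>2) \<le> norm (1 / cw\<^sup>2 * (ne (W \<omega>))\<^sup>2)" by (simp add: power_divide)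
      qed
    qed
    have bnd: "\<bar>(dd (z \<omega>) \<bullet> b) * (W \<omega> \<bullet> b)\<bar> \<le> Me b * (W \<omega> \<bullet> b)\<^sup>2 + Me (z \<omega>)" for \<omega>
    proof -
      define t where "t = W \<omega> \<bullet> b"
      have "1 * (dd (z \<omega>) \<bullet> (t *\<^sub>R b)) \<le> 1\<^sup>2 * Me (t *\<^sub>R b) + Me (z \<omega>)" by (rule dd_bound) simp
      moreover have "1 * (dd (z \<omega>) \<bullet> ((- t) *\<^sub>R b)) \<le> 1\<^sup>2 * Me ((- t) *\<^sub>R b) + Me (z \<omega>)" by (rule dd_bound) simp
      moreover have "Me (t *\<^sub>R b) \<le> t\<^sup>2 * Me b" "Me ((- t) *\<^sub>R b) \<le> (- t)\<^sup>2 * Me b" by (rule Me_scale)+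
      ultimately show ?thesis unfolding t_def[symmetric] by (simp add: abs_le_iff mult.commute)
    qed
    show ic: "integrable M (\<lambda>\<omega>. (dd (z \<omega>) \<bullet> b) * (W \<omega> \<bullet> b))"
    proof (rule Bochner_Integration.integrable_bound)
      show "integrable M (\<lambda>\<omega>. Me b * (W \<omega> \<bullet> b)\<^sup>2 + Me (z \<omega>))"
        using iwb iMe by (intro Bochner_Integration.integrable_add integrable_mult_right)
      show "(\<lambda>\<omega>. (dd (z \<omega>) \<bullet> b) * (W \<omega> \<bullet> b)) \<in> borel_measurable M" by measurable
      show "AE \<omega> in M. norm ((dd (z \<omega>) \<bullet> b) * (W \<omega> \<bullet> b)) \<le> norm (Me b * (W \<omega> \<bullet> b)\<^sup>2 + Me (z \<omega>))"
        using bnd Me_nonneg by (intro AE_I2) (smt (verit) real_norm_def zero_le_power2 mult_nonneg_nonneg)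
    qed
    have "(\<integral>\<omega>. (dd (z \<omega>) \<bullet> b) * real_cond_exp M F (\<lambda>\<omega>. W \<omega> \<bullet> b) \<omega> \<partial>M) = (\<integral>\<omega>. (dd (z \<omega>) \<bullet> b) * (W \<omega> \<bullet> b) \<partial>M)"
      by (rule real_cond_exp_intg(2)[OF ic ddm]) measurable
    moreover have "(\<integral>\<omega>. (dd (z \<omega>) \<bullet> b) * real_cond_exp M F (\<lambda>\<omega>. W \<omega> \<bullet> b) \<omega> \<partial>M) = (\<integral>\<omega>. 0 \<partial>M)"
      using mean b by (intro integral_cong_AE) (auto elim!: AE_mp)
    ultimately show "(\<integral>\<omega>. (dd (z \<omega>) \<bullet> b) * (W \<omega> \<bullet> b) \<partial>M) = 0" by simp
  qed
  have isum: "integrable M (\<lambda>\<omega>. \<Sum>b\<in>Basis. (dd (z \<omega>) \<bullet> b) * (W \<omega> \<bullet> b))"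
    using icross by (rule Bochner_Integration.integrable_sum)
  have esum: "(\<integral>\<omega>. (\<Sum>b\<in>Basis. (dd (z \<omega>) \<bullet> b) * (W \<omega> \<bullet> b)) \<partial>M) = 0"
  proof -
    have "(\<integral>\<omega>. (\<Sum>b\<in>Basis. (dd (z \<omega>) \<bullet> b) * (W \<omega> \<bullet> b)) \<partial>M) = (\<Sum>b\<in>Basis. (\<integral>\<omega>. (dd (z \<omega>) \<bullet> b) * (W \<omega> \<bullet> b) \<partial>M))"
      by (rule Bochner_Integration.integral_sum) (rule icross)
    then show ?thesis using ecross by simp
  qed
  have iR: "integrable M R" unfolding R_def
    using iMe isum insw by (intro Bochner_Integration.integrable_add integrable_mult_right)
  have eR: "integral\<^sup>L M R = c1 * (\<integral>\<omega>. Me (z \<omega>) \<partial>M) + (L / \<mu>) * \<epsilon>\<^sup>2 * (\<integral>\<omega>. (ns (W \<omega>))\<^sup>2 \<partial>M)"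
    unfolding R_def using iMe isum insw esum
    by (simp add: Bochner_Integration.integral_add integrable_mult_right)
  have iX': "integrable M (\<lambda>\<omega>. Me (X' \<omega> - xstar))"
  proof (rule Bochner_Integration.integrable_bound[OF iR])
    have "X' \<in> borel_measurable M" unfolding X'[abs_def] by measurable
    then show "(\<lambda>\<omega>. Me (X' \<omega> - xstar)) \<in> borel_measurable M" by measurable
    show "AE \<omega> in M. norm (Me (X' \<omega> - xstar)) \<le> norm (R \<omega>)"
      using pt Me_nonneg by (intro AE_I2) (smt (verit) real_norm_def)
  qed
  have "(\<integral>\<omega>. Me (X' \<omega> - xstar) \<partial>M) \<le> integral\<^sup>L M R"
    using pt by (intro integral_mono[OF iX' iR])
  also have "\<dots> \<le> c1 * (\<integral>\<omega>. Me (z \<omega>) \<partial>M) + (L / \<mu>) * \<epsilon>\<^sup>2 * (ues\<^sup>2 * (A + B * (2 * (ucs / les)\<^sup>2 * (2 * (1 + \<mu> / lcs\<^sup>2) * (\<integral>\<omega>. Me (z \<omega>) \<partial>M) + (nc xstar)\<^sup>2))))"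
  proof -
    have "(\<integral>\<omega>. (ne (X \<omega>))\<^sup>2 \<partial>M) \<le> (\<integral>\<omega>. 2 * (ucs / les)\<^sup>2 * ((nc (z \<omega>))\<^sup>2 + (nc xstar)\<^sup>2) \<partial>M)"
      using inex inc nex by (intro integral_mono) (auto intro!: integrable_mult_right Bochner_Integration.integrable_add)
    also have "\<dots> = 2 * (ucs / les)\<^sup>2 * ((\<integral>\<omega>. (nc (z \<omega>))\<^sup>2 \<partial>M) + (nc xstar)\<^sup>2)"
      using inc by (simp add: Bochner_Integration.integral_add prob_space)
    also have "\<dots> \<le> 2 * (ucs / les)\<^sup>2 * (2 * (1 + \<mu> / lcs\<^sup>2) * (\<integral>\<omega>. Me (z \<omega>) \<partial>M) + (nc xstar)\<^sup>2)"
    proof -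
      have "(\<integral>\<omega>. (nc (z \<omega>))\<^sup>2 \<partial>M) \<le> (\<integral>\<omega>. 2 * (1 + \<mu> / lcs\<^sup>2) * Me (z \<omega>) \<partial>M)"
        using inc iMe nc_Me by (intro integral_mono) auto
      then have "(\<integral>\<omega>. (nc (z \<omega>))\<^sup>2 \<partial>M) \<le> 2 * (1 + \<mu> / lcs\<^sup>2) * (\<integral>\<omega>. Me (z \<omega>) \<partial>M)" by simp
      then show ?thesis by (intro mult_left_mono) auto
    qed
    finally have x2: "(\<integral>\<omega>. (ne (X \<omega>))\<^sup>2 \<partial>M) \<le> 2 * (ucs / les)\<^sup>2 * (2 * (1 + \<mu> / lcs\<^sup>2) * (\<integral>\<omega>. Me (z \<omega>) \<partial>M) + (nc xstar)\<^sup>2)" .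
    have "(\<integral>\<omega>. (ns (W \<omega>))\<^sup>2 \<partial>M) \<le> ues\<^sup>2 * (A + B * (2 * (ucs / les)\<^sup>2 * (2 * (1 + \<mu> / lcs\<^sup>2) * (\<integral>\<omega>. Me (z \<omega>) \<partial>M) + (nc xstar)\<^sup>2)))"
    proof -
      have "A + B * (\<integral>\<omega>. (ne (X \<omega>))\<^sup>2 \<partial>M) \<le> A + B * (2 * (ucs / les)\<^sup>2 * (2 * (1 + \<mu> / lcs\<^sup>2) * (\<integral>\<omega>. Me (z \<omega>) \<partial>M) + (nc xstar)\<^sup>2))"
        using x2 AB by (simp add: mult_left_mono)
      then have "ues\<^sup>2 * (\<integral>\<omega>. (ne (W \<omega>))\<^sup>2 \<partial>M) \<le> ues\<^sup>2 * (A + B * (2 * (ucs / les)\<^sup>2 * (2 * (1 + \<mu> / lcs\<^sup>2) * (\<integral>\<omega>. Me (z \<omega>) \<partial>M) + (nc xstar)\<^sup>2)))"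
        using ew by (intro mult_left_mono) auto
      then show ?thesis using esw by linarith
    qed
    moreover have "L / \<mu> * \<epsilon>\<^sup>2 \<ge> 0" using L_ge1 mu by simp
    ultimately have "L / \<mu> * \<epsilon>\<^sup>2 * (\<integral>\<omega>. (ns (W \<omega>))\<^sup>2 \<partial>M) \<le> L / \<mu> * \<epsilon>\<^sup>2 * (ues\<^sup>2 * (A + B * (2 * (ucs / les)\<^sup>2 * (2 * (1 + \<mu> / lcs\<^sup>2) * (\<integral>\<omega>. Me (z \<omega>) \<partial>M) + (nc xstar)\<^sup>2))))"
      by (rule mult_left_mono)
    then show ?thesis unfolding eR by linarith
  qed
  also have "\<dots> = (1 - 2 * \<alpha>2 * \<epsilon> + \<epsilon>\<^sup>2 * ((L / \<mu>) * (8 * ucs\<^sup>2 * (1 + \<mu> / lcs\<^sup>2)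
        + 4 * B * ues\<^sup>2 * (ucs / les)\<^sup>2 * (1 + \<mu> / lcs\<^sup>2)))) * (\<integral>\<omega>. Me (X \<omega> - xstar) \<partial>M)
      + \<epsilon>\<^sup>2 * ((L / \<mu>) * ues\<^sup>2 * (A + 2 * B * (ucs / les)\<^sup>2 * (nc xstar)\<^sup>2))"
    unfolding c1_def \<alpha>2 z_def by (simp add: algebra_simps)
  finally show ?thesis using iX' by simp
qed

end

fun Sq :: "real \<Rightarrow> (nat \<Rightarrow> real) \<Rightarrow> nat \<Rightarrow> real" where
  "Sq a e 0 = 0"
| "Sq a e (Suc k) = (1 - a * e k) * Sq a e k + (e k)\<^sup>2"

lemma rec_bound:
  fixes E :: "nat \<Rightarrow> real"
  assumes st: "\<And>k. E (Suc k) \<le> (1 - a * e k) * E k + (e k)\<^sup>2 * D"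
    and nn: "\<And>k. 0 \<le> 1 - a * e k" and e0: "E 0 \<le> V0"
  shows "E k \<le> (\<Prod>j<k. 1 - a * e j) * V0 + D * Sq a e k"
proof (induction k)
  case 0 then show ?case using e0 by simp
next
  case (Suc k)
  have "E (Suc k) \<le> (1 - a * e k) * E k + (e k)\<^sup>2 * D" by (rule st)
  also have "\<dots> \<le> (1 - a * e k) * ((\<Prod>j<k. 1 - a * e j) * V0 + D * Sq a e k) + (e k)\<^sup>2 * D"
    using Suc.IH nn[of k] by (simp add: mult_left_mono)
  also have "\<dots> = (\<Prod>j<Suc k. 1 - a * e j) * V0 + D * Sq a e (Suc k)" by (simp add: algebra_simps)
  finally show ?case .
qed

lemma Sq_sum: "Sq a e k = (\<Sum>i<k. (e i)\<^sup>2 * (\<Prod>j\<in>{Suc i..<k}. 1 - a * e j))"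
proof (induction k)
  case 0 then show ?case by simp
next
  case (Suc k)
  have "(\<Sum>i<k. (e i)\<^sup>2 * (\<Prod>j\<in>{Suc i..<Suc k}. 1 - a * e j)) = (\<Sum>i<k. (1 - a * e k) * ((e i)\<^sup>2 * (\<Prod>j\<in>{Suc i..<k}. 1 - a * e j)))"
    by (intro sum.cong refl) (simp add: prod.atLeastLessThan_Suc)
  also have "\<dots> = (1 - a * e k) * Sq a e k" using Suc.IH by (simp add: sum_distrib_left)
  finally show ?case by simp
qed

lemma ln_lower: fixes x :: real assumes "x > 0" shows "1 - 1 / x \<le> ln x"
proof -
  have "ln (1 / x) \<le> 1 / x - 1" using ln_le_minus_one[of "1/x"] assms by simp
  then show ?thesis using assms by (simp add: ln_div)
qed

lemma bern_neg: fixes t c :: real assumes "t > 0" "c \<ge> 0" shows "1 - c / t \<le> (t / (t + 1)) powr c"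
proof -
  have p: "t / (t + 1) > 0" using assms by simp
  have "1 - (t + 1) / t \<le> ln (t / (t + 1))" using ln_lower[OF p] by simp
  moreover have "1 - (t + 1) / t = - (1 / t)" using assms by (simp add: field_simps)
  ultimately have "- c / t \<le> c * ln (t / (t + 1))" using assms(2)
    by (metis minus_divide_left mult_left_mono times_divide_eq_right mult.right_neutral mult_minus_right)
  then have "1 - c / t \<le> 1 + c * ln (t / (t + 1))" by simp
  also have "\<dots> \<le> exp (c * ln (t / (t + 1)))" by (rule exp_ge_add_one_self)
  also have "\<dots> = (t / (t + 1)) powr c" using p assms by (simp add: powr_def mult.commute)
  finally show ?thesis .
qed

lemma bern_up: fixes x p :: real assumes "x \<ge> 0" "p \<ge> 0" shows "1 + p * (x / (1 + x)) \<le> (1 + x) powr p"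
proof -
  have p: "1 + x > 0" using assms by simp
  have "1 - 1 / (1 + x) \<le> ln (1 + x)" by (rule ln_lower[OF p])
  moreover have "1 - 1 / (1 + x) = x / (1 + x)" using p by (simp add: field_simps)
  ultimately have h: "x / (1 + x) \<le> ln (1 + x)" by simp
  have "p * (x / (1 + x)) \<le> p * ln (1 + x)" using h assms(2) by (rule mult_left_mono)
  then have "1 + p * (x / (1 + x)) \<le> 1 + p * ln (1 + x)" by simp
  also have "\<dots> \<le> exp (p * ln (1 + x))" by (rule exp_ge_add_one_self)
  also have "\<dots> = (1 + x) powr p" using p by (simp add: powr_def mult.commute)
  finally show ?thesis .
qed

lemma bern_conc: fixes x q :: real assumes "x \<ge> 0" "0 \<le> q" "q \<le> 1" shows "(1 + x) powr q \<le> 1 + q * x"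
  using Youngs_inequality_0[of q "1 - q" "1 + x" 1] assms by (simp add: algebra_simps)

lemma cancel_mid: fixes a b c :: real shows "b \<noteq> 0 \<Longrightarrow> (a / b) * (b / c) = a / c"
  by (cases "c = 0") (simp_all add: field_simps)

lemma prod_bound:
  fixes K c :: real
  assumes K: "K > 0" and c: "c \<ge> 0" and nn: "\<And>j. 0 \<le> 1 - c / (real j + K)" and ik: "i \<le> k"
  shows "(\<Prod>j\<in>{i..<k}. 1 - c / (real j + K)) \<le> ((real i + K) / (real k + K)) powr c"
  using ik
proof (induction k rule: dec_induct)
  case base
  have "(real i + K) / (real i + K) = 1" using K by simp
  then show ?case by simp
next
  case (step n)
  have t: "real n + K > 0" using K by simp
  have "(\<Prod>j\<in>{i..<Suc n}. 1 - c / (real j + K)) = (\<Prod>j\<in>{i..<n}. 1 - c / (real j + K)) * (1 - c / (real n + K))"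
    using step.hyps by (simp add: prod.atLeastLessThan_Suc)
  also have "\<dots> \<le> ((real i + K) / (real n + K)) powr c * ((real n + K) / (real n + K + 1)) powr c"
    using step.IH bern_neg[OF t c] nn[of n] by (intro mult_mono) auto
  also have "\<dots> = ((real i + K) / (real n + K) * ((real n + K) / (real n + K + 1))) powr c"
    using K by (simp add: powr_mult[symmetric])
  also have "(real i + K) / (real n + K) * ((real n + K) / (real n + K + 1)) = (real i + K) / (real (Suc n) + K)"
    using t cancel_mid[of "real n + K" "real i + K" "real n + K + 1"] by (simp add: add.commute add.left_commute)
  finally show ?case .
qed

lemma tele_dec:
  fixes u p :: real
  assumes u: "u > 0" and p: "p > 0"
  shows "p * (u + 1) powr (- p - 1) \<le> u powr (- p) - (u + 1) powr (- p)"
proof -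
  define A where "A = (u + 1) powr (- p)"
  have A0: "A > 0" unfolding A_def using u by simp
  have e1: "u powr (- p) = A * ((1 + 1 / u) powr p)"
  proof -
    have "(1 + 1 / u) = (u + 1) / u" using u by (simp add: field_simps)
    then have "(1 + 1 / u) powr p = (u + 1) powr p / u powr p" using u by (simp add: powr_divide)
    then show ?thesis unfolding A_def using u by (simp add: powr_minus field_simps)
  qed
  have "1 + p * ((1 / u) / (1 + 1 / u)) \<le> (1 + 1 / u) powr p" by (rule bern_up) (use u p in auto)
  moreover have "(1 / u) / (1 + 1 / u) = 1 / (u + 1)" using u by (simp add: field_simps)
  ultimately have "A * (1 + p / (u + 1)) \<le> u powr (- p)" unfolding e1 using A0 by (simp add: mult_left_mono)
  then have "A * p / (u + 1) \<le> u powr (- p) - A" by (simp add: algebra_simps)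
  moreover have "A * p / (u + 1) = p * (u + 1) powr (- p - 1)"
    unfolding A_def using u by (simp add: powr_diff powr_minus field_simps)
  ultimately show ?thesis unfolding A_def by simp
qed

lemma tele_inc:
  fixes u q :: real
  assumes u: "u \<ge> 1" and q: "q > 0"
  shows "q / 2 * u powr (q - 1) \<le> (u + 1) powr q - u powr q"
proof -
  have u0: "u > 0" using u by simp
  have e1: "(u + 1) powr q = u powr q * (1 + 1 / u) powr q"
  proof -
    have "u + 1 = u * (1 + 1 / u)" using u0 by (simp add: field_simps)
    moreover have "(u * (1 + 1 / u)) powr q = u powr q * (1 + 1 / u) powr q" using u0 powr_mult[of u "1 + 1/u" q] by simp
    ultimately show ?thesis by simp
  qed
  have "1 + q * ((1 / u) / (1 + 1 / u)) \<le> (1 + 1 / u) powr q" by (rule bern_up) (use u0 q in auto)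
  moreover have "(1 / u) / (1 + 1 / u) = 1 / (u + 1)" using u0 by (simp add: field_simps)
  moreover have "q * (1 / (2 * u)) \<le> q * (1 / (u + 1))" using u q by (intro mult_left_mono) (auto simp: field_simps)
  ultimately have "1 + q / (2 * u) \<le> (1 + 1 / u) powr q" by simp
  then have "u powr q * (1 + q / (2 * u)) \<le> (u + 1) powr q" unfolding e1 using u0 by (simp add: mult_left_mono)
  moreover have "u powr q * (q / (2 * u)) = q / 2 * u powr (q - 1)" using u0 by (simp add: powr_diff field_simps)
  moreover have "u powr q * (1 + q / (2 * u)) = u powr q + u powr q * (q / (2 * u))" by (simp only: distrib_left mult_1_right)
  ultimately show ?thesis by linarith
qed

lemma sum_c1:
  fixes K c :: real
  assumes K: "K \<ge> 1" and c: "0 < c" "c < 1"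
  shows "(\<Sum>i<k. (real i + 1 + K) powr c / (real i + K)\<^sup>2) \<le> 4 / (1 - c)"
proof -
  define f where "f i = (real i + 1 + K) powr c / (real i + K)\<^sup>2" for i
  have fb: "f i \<le> 2 * (real i + K) powr (c - 2)" for i
  proof -
    have t: "real i + K \<ge> 1" using K by simp
    have "(real i + 1 + K) powr c \<le> (2 * (real i + K)) powr c"
      using t c by (intro powr_mono2) auto
    also have "\<dots> = 2 powr c * (real i + K) powr c" using t powr_mult[of 2 "real i + K" c] by simp
    also have "\<dots> \<le> 2 * (real i + K) powr c"
    proof -
      have "2 powr c \<le> 2 powr (1::real)" using c by (intro powr_mono) auto
      then show ?thesis by (intro mult_right_mono) auto
    qed
    finally have "f i \<le> 2 * (real i + K) powr c / (real i + K)\<^sup>2" unfolding f_def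
      using t by (intro divide_right_mono) auto
    also have "\<dots> = 2 * (real i + K) powr (c - 2)" using t by (simp add: powr_diff powr_numeral)
    finally show ?thesis .
  qed
  have claim: "(\<Sum>i<Suc k. f i) \<le> 2 + 2 * (K powr (c - 1) - (real k + K) powr (c - 1)) / (1 - c)" for k
  proof (induction k)
    case 0
    have "K powr (c - 2) \<le> K powr 0" using K c by (intro powr_mono) auto
    then show ?case using fb[of 0] K by simp
  next
    case (Suc k)
    have u: "real k + K > 0" using K by simp
    have td: "(1 - c) * (real k + K + 1) powr (- (1 - c) - 1) \<le> (real k + K) powr (- (1 - c)) - (real k + K + 1) powr (- (1 - c))"
      by (rule tele_dec[OF u]) (use c in simp)
    have "f (Suc k) \<le> 2 * (real k + K + 1) powr (c - 2)" using fb[of "Suc k"] by (simp add: add_ac)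
    also have "\<dots> \<le> 2 * (((real k + K) powr (c - 1) - (real k + K + 1) powr (c - 1)) / (1 - c))"
      using td c by (simp add: field_simps)
    finally have "f (Suc k) \<le> 2 * ((real k + K) powr (c - 1) - (real k + K + 1) powr (c - 1)) / (1 - c)" by simp
    then show ?case using Suc.IH c by (simp add: field_simps add_ac)
  qed
  show ?thesis
  proof (cases k)
    case 0 then show ?thesis using c by simp
  next
    case (Suc m)
    have a: "K powr (c - 1) \<le> 1" using K c powr_mono[of "c - 1" 0 K] by simp
    have b: "0 \<le> (real m + K) powr (c - 1)" by simp
    have "(\<Sum>i<k. f i) \<le> 2 + 2 * (K powr (c - 1) - (real m + K) powr (c - 1)) / (1 - c)"
      using claim[of m] Suc by simp
    also have "\<dots> \<le> 2 + 2 / (1 - c)"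
    proof -
      have "2 * (K powr (c - 1) - (real m + K) powr (c - 1)) \<le> 2" using a b by (smt (verit))
      then show ?thesis using c by (intro add_left_mono divide_right_mono) auto
    qed
    also have "\<dots> \<le> 4 / (1 - c)" using c by (simp add: field_simps)
    finally show ?thesis unfolding f_def .
  qed
qed

lemma sum_c2:
  fixes K :: real
  assumes K: "K \<ge> 2"
  shows "(\<Sum>i<k. (real i + 1 + K) / (real i + K)\<^sup>2) \<le> 2 * ln (real k + K)"
proof -
  have claim: "(\<Sum>i<k. (real i + 1 + K) / (real i + K)\<^sup>2) \<le> 2 * (ln (real k + K - 1) - ln (K - 1))" for k
  proof (induction k)
    case 0 then show ?case by simp
  next
    case (Suc k)
    define t where "t = real k + K"
    have t: "t \<ge> 2" unfolding t_def using K by simp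
    have a: "(t + 1) / t\<^sup>2 \<le> 2 / t" using t by (simp add: field_simps power2_eq_square)
    have "ln ((t - 1) / t) \<le> (t - 1) / t - 1" using t by (intro ln_le_minus_one) simp
    moreover have "ln ((t - 1) / t) = ln (t - 1) - ln t" using t by (simp add: ln_div)
    moreover have "(t - 1) / t - 1 = - (1 / t)" using t by (simp add: field_simps)
    ultimately have b: "1 / t \<le> ln t - ln (t - 1)" by simp
    have "(\<Sum>i<Suc k. (real i + 1 + K) / (real i + K)\<^sup>2) = (\<Sum>i<k. (real i + 1 + K) / (real i + K)\<^sup>2) + (t + 1) / t\<^sup>2"
      unfolding t_def by (simp add: add_ac)
    also have "\<dots> \<le> 2 * (ln (t - 1) - ln (K - 1)) + 2 * (ln t - ln (t - 1))"
    proof -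
      have "2 / t \<le> 2 * (ln t - ln (t - 1))" using b by simp
      then show ?thesis using Suc.IH a unfolding t_def by linarith
    qed
    also have "\<dots> = 2 * (ln (real (Suc k) + K - 1) - ln (K - 1))" unfolding t_def by simp
    finally show ?case .
  qed
  have "ln (K - 1) \<ge> 0" using K by simp
  moreover have "ln (real k + K - 1) \<le> ln (real k + K)" using K by simp
  ultimately show ?thesis using claim[of k] by (smt (verit))
qed

lemma tele_comb: fixes x a b c d :: real shows "x * (a - b) / d + x * (c - a) / d = x * (c - b) / d"
  by (simp add: add_divide_distrib[symmetric] algebra_simps)

lemma sum_c3:
  fixes K c :: real
  assumes K: "K \<ge> 1" and c: "1 < c" "c \<le> K"
  shows "(\<Sum>i<k. (real i + 1 + K) powr c / (real i + K)\<^sup>2) \<le> 2 * exp 1 * ((real k + K) powr (c - 1) - K powr (c - 1)) / (c - 1)"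
proof (induction k)
  case 0 then show ?case by simp
next
  case (Suc k)
  define t where "t = real k + K"
  have t: "t \<ge> 1" "t \<ge> c" unfolding t_def using K c by auto
  have r1: "((t + 1) / t) powr c \<le> exp 1"
  proof -
    have "((t + 1) / t) = 1 + 1 / t" using t by (simp add: field_simps)
    moreover have "ln (1 + 1 / t) \<le> 1 / t" using t by (intro ln_add_one_self_le_self) simp
    then have "c * ln (1 + 1 / t) \<le> c * (1 / t)" using c by (intro mult_left_mono) auto
    moreover have "c * (1 / t) \<le> 1" using t by (simp add: field_simps)
    ultimately have "c * ln ((t + 1) / t) \<le> 1" by simp
    moreover have "((t + 1) / t) powr c = exp (c * ln ((t + 1) / t))" using t by (simp add: powr_def mult.commute)
    ultimately show ?thesis by simp
  qed
  have r2: "(t + 1) powr c / t\<^sup>2 = ((t + 1) / t) powr c * t powr (c - 2)"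
    using t by (simp add: powr_divide powr_diff powr_numeral field_simps)
  have tinc: "(c - 1) / 2 * t powr (c - 1 - 1) \<le> (t + 1) powr (c - 1) - t powr (c - 1)"
    by (rule tele_inc) (use t c in auto)
  have "(t + 1) powr c / t\<^sup>2 \<le> exp 1 * t powr (c - 2)"
    unfolding r2 using r1 by (intro mult_right_mono) auto
  also have "\<dots> \<le> exp 1 * (2 * ((t + 1) powr (c - 1) - t powr (c - 1)) / (c - 1))"
    using tinc c by (intro mult_left_mono) (auto simp: field_simps)
  finally have tm: "(t + 1) powr c / t\<^sup>2 \<le> 2 * exp 1 * ((t + 1) powr (c - 1) - t powr (c - 1)) / (c - 1)" by (simp add: algebra_simps)
  have "(\<Sum>i<Suc k. (real i + 1 + K) powr c / (real i + K)\<^sup>2) = (\<Sum>i<k. (real i + 1 + K) powr c / (real i + K)\<^sup>2) + (t + 1) powr c / t\<^sup>2"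
    unfolding t_def by (simp add: add_ac)
  also have "\<dots> \<le> 2 * exp 1 * (t powr (c - 1) - K powr (c - 1)) / (c - 1) + 2 * exp 1 * ((t + 1) powr (c - 1) - t powr (c - 1)) / (c - 1)"
    using Suc.IH tm unfolding t_def by linarith
  also have "\<dots> = 2 * exp 1 * ((real (Suc k) + K) powr (c - 1) - K powr (c - 1)) / (c - 1)"
  proof -
    have e: "real (Suc k) + K = t + 1" unfolding t_def by simp
    show ?thesis unfolding e by (rule tele_comb)
  qed
  finally show ?case .
qed

lemma step_c4:
  fixes t \<xi> :: real
  assumes t: "t > 0" and \<xi>: "0 < \<xi>" "\<xi> < 1"
  shows "(t + 1) powr (1 - \<xi>) - t powr (1 - \<xi>) \<le> (1 - \<xi>) / t powr \<xi>"
proof -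
  have e1: "(t + 1) powr (1 - \<xi>) = t powr (1 - \<xi>) * (1 + 1 / t) powr (1 - \<xi>)"
  proof -
    have "t + 1 = t * (1 + 1 / t)" using t by (simp add: field_simps)
    moreover have "(t * (1 + 1 / t)) powr (1 - \<xi>) = t powr (1 - \<xi>) * (1 + 1 / t) powr (1 - \<xi>)"
      using t powr_mult[of t "1 + 1/t" "1 - \<xi>"] by simp
    ultimately show ?thesis by simp
  qed
  have "(1 + 1 / t) powr (1 - \<xi>) \<le> 1 + (1 - \<xi>) * (1 / t)" by (rule bern_conc) (use t \<xi> in auto)
  then have "(t + 1) powr (1 - \<xi>) \<le> t powr (1 - \<xi>) * (1 + (1 - \<xi>) * (1 / t))"
    unfolding e1 by (intro mult_left_mono) auto
  moreover have "t powr (1 - \<xi>) * ((1 - \<xi>) * (1 / t)) = (1 - \<xi>) / t powr \<xi>"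
    using t by (simp add: powr_diff field_simps)
  ultimately show ?thesis by (simp add: distrib_left)
qed

lemma prod_c4:
  fixes K \<xi> c :: real
  assumes K: "K > 0" and \<xi>: "0 < \<xi>" "\<xi> < 1" and c: "c \<ge> 0"
    and nn: "\<And>j. 0 \<le> 1 - c / (real j + K) powr \<xi>"
  shows "(\<Prod>j<k. 1 - c / (real j + K) powr \<xi>) \<le> exp (- (c / (1 - \<xi>)) * ((real k + K) powr (1 - \<xi>) - K powr (1 - \<xi>)))"
proof (induction k)
  case 0 then show ?case by simp
next
  case (Suc k)
  define t where "t = real k + K"
  have t: "t > 0" unfolding t_def using K by simp
  have P0: "0 \<le> (\<Prod>j<k. 1 - c / (real j + K) powr \<xi>)" using nn by (intro prod_nonneg) auto
  have "(\<Prod>j<Suc k. 1 - c / (real j + K) powr \<xi>) = (\<Prod>j<k. 1 - c / (real j + K) powr \<xi>) * (1 - c / t powr \<xi>)"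
    unfolding t_def by simp
  also have "\<dots> \<le> exp (- (c / (1 - \<xi>)) * (t powr (1 - \<xi>) - K powr (1 - \<xi>))) * exp (- (c / t powr \<xi>))"
  proof (rule mult_mono)
    show "(\<Prod>j<k. 1 - c / (real j + K) powr \<xi>) \<le> exp (- (c / (1 - \<xi>)) * (t powr (1 - \<xi>) - K powr (1 - \<xi>)))"
      using Suc.IH unfolding t_def .
    show "1 - c / t powr \<xi> \<le> exp (- (c / t powr \<xi>))" using exp_ge_add_one_self[of "- (c / t powr \<xi>)"] by simp
  qed (use P0 nn[of k] in \<open>auto simp: t_def\<close>)
  also have "\<dots> = exp (- (c / (1 - \<xi>)) * (t powr (1 - \<xi>) - K powr (1 - \<xi>)) - c / t powr \<xi>)"
    by (simp add: exp_add[symmetric])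
  also have "\<dots> \<le> exp (- (c / (1 - \<xi>)) * ((t + 1) powr (1 - \<xi>) - K powr (1 - \<xi>)))"
  proof -
    have s: "(t + 1) powr (1 - \<xi>) - t powr (1 - \<xi>) \<le> (1 - \<xi>) / t powr \<xi>" by (rule step_c4[OF t \<xi>])
    have cq: "c / (1 - \<xi>) \<ge> 0" using c \<xi> by simp
    have "(c / (1 - \<xi>)) * ((t + 1) powr (1 - \<xi>) - t powr (1 - \<xi>)) \<le> (c / (1 - \<xi>)) * ((1 - \<xi>) / t powr \<xi>)"
      using s cq by (rule mult_left_mono)
    also have "\<dots> = c / t powr \<xi>" using \<xi> by simp
    finally have "(c / (1 - \<xi>)) * ((t + 1) powr (1 - \<xi>) - t powr (1 - \<xi>)) \<le> c / t powr \<xi>" .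
    then show ?thesis by (simp add: algebra_simps)
  qed
  also have "t + 1 = real (Suc k) + K" unfolding t_def by simp
  finally show ?case .
qed

lemma Sq_c4:
  fixes K \<xi> \<epsilon> a :: real and e :: "nat \<Rightarrow> real"
  assumes e_def: "\<And>k. e k = \<epsilon> / (real k + K) powr \<xi>" and a: "a > 0" and \<epsilon>: "\<epsilon> > 0" and K: "K > 0"
    and \<xi>: "0 < \<xi>" "\<xi> < 1" and Kb: "2 * \<xi> / (a * \<epsilon>) \<le> K powr (1 - \<xi>)"
    and nn: "\<And>k. 0 \<le> 1 - a * e k"
  shows "Sq a e k \<le> (2 / a) * e k"
proof (induction k)
  case 0 then show ?case using e_def[of 0] \<epsilon> a K by simp
next
  case (Suc k)
  define t where "t = real k + K"
  have t: "t > 0" unfolding t_def using K by simp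
  have ek: "e k = \<epsilon> / t powr \<xi>" unfolding t_def by (rule e_def)
  have ek1: "e (Suc k) = \<epsilon> / (t + 1) powr \<xi>" unfolding t_def using e_def[of "Suc k"] by (simp add: add_ac)
  have ek0: "e k > 0" unfolding ek using t \<epsilon> by simp
  have d1: "e k * (1 - \<xi> / t) \<le> e (Suc k)"
  proof -
    have "1 - \<xi> / t \<le> (t / (t + 1)) powr \<xi>" by (rule bern_neg) (use t \<xi> in auto)
    also have "\<dots> = t powr \<xi> / (t + 1) powr \<xi>" using t by (simp add: powr_divide)
    finally have "e k * (1 - \<xi> / t) \<le> e k * (t powr \<xi> / (t + 1) powr \<xi>)" using ek0 by (intro mult_left_mono) auto
    also have "\<dots> = e (Suc k)" unfolding ek ek1 using t by simp
    finally show ?thesis .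
  qed
  have d2: "\<xi> / t \<le> a / 2 * e k"
  proof -
    define T where "T = t powr (1 - \<xi>)"
    have T: "T \<ge> 2 * \<xi> / (a * \<epsilon>)"
    proof -
      have "K powr (1 - \<xi>) \<le> t powr (1 - \<xi>)" unfolding t_def using K \<xi> by (intro powr_mono2) auto
      then show ?thesis using Kb unfolding T_def by simp
    qed
    have Tp: "T > 0" using T \<xi> a \<epsilon> by (smt (verit) divide_pos_pos mult_pos_pos)
    have tT: "t powr \<xi> * T = t" unfolding T_def using t by (simp add: powr_add[symmetric])
    have "\<xi> * t powr \<xi> \<le> a * \<epsilon> / 2 * t"
    proof -
      have "\<xi> * t powr \<xi> * T \<le> \<xi> * t powr \<xi> * T" by simp
      have "2 * \<xi> \<le> a * \<epsilon> * T" using T a \<epsilon> by (simp add: field_simps)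
      then have "2 * \<xi> * t powr \<xi> \<le> a * \<epsilon> * T * t powr \<xi>" using t by (intro mult_right_mono) auto
      also have "\<dots> = a * \<epsilon> * t" using tT by (simp add: mult.assoc mult.commute)
      finally show ?thesis by simp
    qed
    then have "\<xi> * t powr \<xi> / (t * t powr \<xi>) \<le> (a * \<epsilon> / 2 * t) / (t * t powr \<xi>)"
      using t by (intro divide_right_mono) auto
    then show ?thesis unfolding ek using t by (simp add: field_simps)
  qed
  have "Sq a e (Suc k) = (1 - a * e k) * Sq a e k + (e k)\<^sup>2" by simp
  also have "\<dots> \<le> (1 - a * e k) * ((2 / a) * e k) + (e k)\<^sup>2"
  proof -
    have "(1 - a * e k) * Sq a e k \<le> (1 - a * e k) * ((2 / a) * e k)"
      by (rule mult_left_mono[OF Suc.IH]) (use nn[of k] in simp)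
    then show ?thesis by simp
  qed
  also have "\<dots> = (2 / a) * e k - (e k)\<^sup>2" using a by (simp add: field_simps power2_eq_square)
  also have "\<dots> \<le> (2 / a) * e (Suc k)"
  proof -
    have "e k - e (Suc k) \<le> e k * (\<xi> / t)" using d1 by (simp add: algebra_simps)
    also have "\<dots> \<le> e k * (a / 2 * e k)" using d2 ek0 by (intro mult_left_mono) auto
    finally have "e k - e (Suc k) \<le> a / 2 * (e k)\<^sup>2" by (simp add: power2_eq_square algebra_simps)
    then have h: "(2 / a) * (e k - e (Suc k)) \<le> (2 / a) * (a / 2 * (e k)\<^sup>2)" using a by (intro mult_left_mono) auto
    have "(2 / a) * (a / 2 * (e k)\<^sup>2) = (e k)\<^sup>2" using a by simp
    moreover have "(2 / a) * (e k - e (Suc k)) = (2 / a) * e k - (2 / a) * e (Suc k)" by (simp add: right_diff_distrib)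
    ultimately show ?thesis using h by linarith
  qed
  finally show ?case .
qed

lemma gen_filtr_props:
  fixes M :: "'w measure" and x w :: "nat \<Rightarrow> 'w \<Rightarrow> 'a::topological_space"
  assumes xm: "\<And>i. x i \<in> borel_measurable M" and wm: "\<And>i. w i \<in> borel_measurable M"
  shows "subalgebra M (gen_filtr M x w k)" and "x k \<in> borel_measurable (gen_filtr M x w k)"
proof -
  define G where "G = (\<Union>i\<in>{..k}. {x i -` B \<inter> space M | B. B \<in> sets borel})
      \<union> (\<Union>i\<in>{..<k}. {w i -` B \<inter> space M | B. B \<in> sets borel})"
  have gf: "gen_filtr M x w k = sigma (space M) G" unfolding gen_filtr_def G_def ..
  have GP: "G \<subseteq> Pow (space M)" unfolding G_def by auto
  have GM: "G \<subseteq> sets M" unfolding G_def using measurable_sets[OF xm] measurable_sets[OF wm] by auto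
  have sp: "space (gen_filtr M x w k) = space M" unfolding gf using GP by (simp add: space_measure_of)
  have st: "sets (gen_filtr M x w k) = sigma_sets (space M) G" unfolding gf using GP by (simp add: sets_measure_of)
  show "subalgebra M (gen_filtr M x w k)"
    unfolding subalgebra_def sp st using sets.sigma_sets_subset[OF GM] by simp
  show "x k \<in> borel_measurable (gen_filtr M x w k)"
  proof (rule measurableI)
    fix A :: "'a set" assume "A \<in> sets borel"
    then have "x k -` A \<inter> space M \<in> G" unfolding G_def by blast
    then show "x k -` A \<inter> space (gen_filtr M x w k) \<in> sets (gen_filtr M x w k)"
      unfolding sp st by (rule sigma_sets.Basic)
  qed simp
qed

theorem corollary2:
  fixes M :: "'w measure"
    and nc ne ns :: "'a::euclidean_space \<Rightarrow> real"
    and H :: "'a \<Rightarrow> 'a"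
    and \<gamma> :: real and xstar x0 :: 'a
    and x w :: "nat \<Rightarrow> 'w \<Rightarrow> 'a"
    and A B L lcs les ucs ues \<mu> \<alpha>1 \<alpha>2 \<alpha>3 \<alpha>4 \<epsilon> \<xi> K :: real
    and \<epsilon>k :: "nat \<Rightarrow> real"
  assumes M: "prob_space M"
    and norms: "is_norm nc" "is_norm ne" "is_norm ns"
    and contr: "\<forall>u v. nc (H u - H v) \<le> \<gamma> * nc (u - v)"
    and \<gamma>: "0 < \<gamma>" "\<gamma> < 1"
    and fixpt: "H xstar = xstar"
    and x0: "x 0 = (\<lambda>\<omega>. x0)"
    and step_def: "\<forall>k. \<epsilon>k k = \<epsilon> / (real k + K) powr \<xi>"
    and rec: "\<forall>k \<omega>. x (Suc k) \<omega> = x k \<omega> + \<epsilon>k k *\<^sub>R (H (x k \<omega>) - x k \<omega> + w k \<omega>)"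
    and w_int: "\<forall>k. integrable M (w k)"
    and w_mean: "\<forall>k. \<forall>b\<in>Basis. AE \<omega> in M.
                   real_cond_exp M (gen_filtr M x w k) (\<lambda>\<omega>. w k \<omega> \<bullet> b) \<omega> = 0"
    and w_var: "\<forall>k. AE \<omega> in M.
                   nn_cond_exp M (gen_filtr M x w k) (\<lambda>\<omega>. ennreal ((ne (w k \<omega>))\<^sup>2)) \<omega>
                   \<le> ennreal (A + B * (ne (x k \<omega>))\<^sup>2)"
    and AB: "A > 0" "B > 0"
    and smooth: "L_smooth (\<lambda>u. (ns u)\<^sup>2 / 2) ns L"
    and lcs: "0 < lcs" "lcs \<le> 1" and les: "0 < les" "les \<le> 1"
    and ucs: "1 \<le> ucs" and ues: "1 \<le> ues"
    and equiv_cs: "\<forall>u. lcs * nc u \<le> ns u \<and> ns u \<le> ucs * nc u"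
    and equiv_es: "\<forall>u. les * ne u \<le> ns u \<and> ns u \<le> ues * ne u"
    and \<mu>: "\<mu> > 0"
    and \<alpha>1_def: "\<alpha>1 = (1 + \<mu> / lcs\<^sup>2) / (1 + \<mu> / ucs\<^sup>2)"
    and \<alpha>2_def: "\<alpha>2 = 1 - \<gamma> * sqrt \<alpha>1"
    and \<alpha>3_def: "\<alpha>3 = 4 * ucs\<^sup>2 * ues\<^sup>2 * (B + 2) * L * (lcs\<^sup>2 + \<mu>) / (\<mu> * lcs\<^sup>2 * les\<^sup>2)"
    and \<alpha>4_def: "\<alpha>4 = \<alpha>3 / (2 * (B + 2))"
    and \<alpha>2_pos: "\<alpha>2 > 0"
    and \<epsilon>: "\<epsilon> > 0"
    and \<xi>: "0 < \<xi>" "\<xi> \<le> 1"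
    and K_def: "K = (if \<xi> = 1 then max 1 (\<epsilon> * \<alpha>3 / \<alpha>2)
                 else max 1 (max ((\<epsilon> * \<alpha>3 / \<alpha>2) powr (1 / \<xi>))
                                 ((2 * \<xi> / (\<alpha>2 * \<epsilon>)) powr (1 / (1 - \<xi>)))))"
  shows "\<forall>k::nat.
    (\<xi> = 1 \<and> \<epsilon> < 1 / \<alpha>2 \<longrightarrow>
       (\<integral>\<^sup>+\<omega>. ennreal ((nc (x k \<omega> - xstar))\<^sup>2) \<partial>M)
       \<le> ennreal (\<alpha>1 * (nc (x0 - xstar))\<^sup>2 * (K / (real k + K)) powr (\<alpha>2 * \<epsilon>)
          + 4 * \<epsilon>\<^sup>2 * \<alpha>4 / (1 - \<alpha>2 * \<epsilon>)
            * (A + 2 * B * (nc xstar)\<^sup>2) / (real k + K) powr (\<alpha>2 * \<epsilon>))) \<and>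
    (\<xi> = 1 \<and> \<epsilon> = 1 / \<alpha>2 \<longrightarrow>
       (\<integral>\<^sup>+\<omega>. ennreal ((nc (x k \<omega> - xstar))\<^sup>2) \<partial>M)
       \<le> ennreal (\<alpha>1 * (nc (x0 - xstar))\<^sup>2 * (K / (real k + K))
          + 4 * \<alpha>4 / \<alpha>2\<^sup>2
            * ((A + 2 * B * (nc xstar)\<^sup>2) * ln (real k + K)) / (real k + K))) \<and>
    (\<xi> = 1 \<and> \<epsilon> > 1 / \<alpha>2 \<longrightarrow>
       (\<integral>\<^sup>+\<omega>. ennreal ((nc (x k \<omega> - xstar))\<^sup>2) \<partial>M)
       \<le> ennreal (\<alpha>1 * (nc (x0 - xstar))\<^sup>2 * (K / (real k + K)) powr (\<alpha>2 * \<epsilon>)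
          + 4 * exp 1 * \<epsilon>\<^sup>2 * \<alpha>4 / (\<alpha>2 * \<epsilon> - 1)
            * (A + 2 * B * (nc xstar)\<^sup>2) / (real k + K))) \<and>
    (0 < \<xi> \<and> \<xi> < 1 \<longrightarrow>
       (\<integral>\<^sup>+\<omega>. ennreal ((nc (x k \<omega> - xstar))\<^sup>2) \<partial>M)
       \<le> ennreal (\<alpha>1 * (nc (x0 - xstar))\<^sup>2
            * exp (- (\<alpha>2 * \<epsilon> / (1 - \<xi>)) * ((real k + K) powr (1 - \<xi>) - K powr (1 - \<xi>)))
          + 2 * \<epsilon> * \<alpha>4 / \<alpha>2 * (A + 2 * B * (nc xstar)\<^sup>2) / (real k + K) powr \<xi>))"
proof -
  interpret P: prob_space M by (rule M)
  obtain grad where gd: "\<And>x. ((\<lambda>u. (ns u)\<^sup>2 / 2) has_derivative (\<lambda>v. grad x \<bullet> v)) (at x)"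
    and smg: "\<And>x y. (ns y)\<^sup>2 / 2 \<le> (ns x)\<^sup>2 / 2 + grad x \<bullet> (y - x) + L / 2 * (ns (x - y))\<^sup>2"
    and cvx: "convex_on UNIV (\<lambda>u. (ns u)\<^sup>2 / 2)"
    using smooth unfolding L_smooth_def by blast
  have ucs0: "ucs > 0" using ucs by simp
  interpret E: env nc ns \<mu> L lcs ucs grad
    by unfold_locales (use norms gd smg cvx equiv_cs lcs ucs0 \<mu> in auto)
  have a1: "\<alpha>1 = E.a1" unfolding \<alpha>1_def E.a1_def ..
  have L1: "L \<ge> 1" by (rule E.L_ge1)
  have a1p: "\<alpha>1 > 0" unfolding a1 by (rule E.a1_pos)
  have gs: "\<gamma> * sqrt \<alpha>1 > 0" using \<gamma> a1p by simp
  have a2le: "\<alpha>2 \<le> 1" unfolding \<alpha>2_def using gs by simp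
  define C where "C = A + 2 * B * (nc xstar)\<^sup>2"
  have C0: "C \<ge> 0" unfolding C_def using AB by simp
  define D where "D = (L / \<mu>) * ues\<^sup>2 * (ucs / les)\<^sup>2 * C"
  have D0: "D \<ge> 0" unfolding D_def using L1 \<mu> C0 by simp
  define lam where "lam = 1 + \<mu> / lcs\<^sup>2"
  have lam0: "lam > 0" unfolding lam_def using \<mu> lcs by (simp add: add_pos_pos)
  have Q1: "(ucs / les)\<^sup>2 \<ge> 1" using ucs les by (simp add: field_simps)
  have Q2: "ues\<^sup>2 / les\<^sup>2 \<ge> 1" using ues les by (simp add: field_simps)
  have a3eq: "\<alpha>3 = (L / \<mu>) * lam * (4 * (B + 2) * ucs\<^sup>2 * (ues\<^sup>2 / les\<^sup>2))"
    unfolding \<alpha>3_def lam_def using \<mu> lcs les by (simp add: field_simps)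
  have b2: "B + 2 > 0" using AB by simp
  have a4': "\<alpha>4 = (L / \<mu>) * lam * (2 * ucs\<^sup>2 * (ues\<^sup>2 / les\<^sup>2))"
  proof -
    have nz: "2 * (B + 2) \<noteq> (0::real)" using b2 by simp
    have e4: "4 * (B + 2) = 2 * (2 * (B + 2))" by simp
    have "4 * (B + 2) / (2 * (B + 2)) = (2::real)"
      unfolding e4 by (rule nonzero_mult_div_cancel_right[OF nz])
    moreover have "\<alpha>4 = (L / \<mu>) * lam * (ucs\<^sup>2 * (ues\<^sup>2 / les\<^sup>2)) * (4 * (B + 2) / (2 * (B + 2)))"
      unfolding \<alpha>4_def a3eq by (simp only: times_divide_eq_right times_divide_eq_left divide_divide_eq_left mult_ac)
    ultimately show ?thesis by (simp only: mult_ac)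
  qed
  have a4eq: "2 * lam * D = \<alpha>4 * C"
    unfolding D_def a4' by (simp add: power_divide algebra_simps)
  have Ll: "(L / \<mu>) * lam \<ge> 1 / \<mu> * 1"
    unfolding lam_def using L1 \<mu> lcs by (intro mult_mono) (auto simp: field_simps)
  have a3ge2: "\<alpha>3 \<ge> 2"
  proof -
    have f1: "(L / \<mu>) * lam \<ge> 1"
    proof -
      have "(L / \<mu>) * lam = L / \<mu> + L / lcs\<^sup>2" unfolding lam_def using \<mu> lcs by (simp add: field_simps)
      moreover have "L / lcs\<^sup>2 \<ge> L" using L1 lcs by (simp add: field_simps power_le_one mult_left_le)
      moreover have "L / \<mu> \<ge> 0" using L1 \<mu> by simp
      ultimately show ?thesis using L1 by linarith
    qed
    have f2: "4 * (B + 2) * ucs\<^sup>2 * (ues\<^sup>2 / les\<^sup>2) \<ge> 2"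
    proof -
      have "ucs\<^sup>2 \<ge> 1" using ucs by (simp add: one_le_power)
      then have "1 \<le> ucs\<^sup>2 * (ues\<^sup>2 / les\<^sup>2)" using Q2 by (metis mult_mono mult_1_right zero_le_one order_trans)
      moreover have "2 \<le> 4 * (B + 2)" using AB by simp
      ultimately have "2 * 1 \<le> 4 * (B + 2) * (ucs\<^sup>2 * (ues\<^sup>2 / les\<^sup>2))" by (intro mult_mono) auto
      then show ?thesis by (simp add: mult.assoc)
    qed
    have "1 * 2 \<le> ((L / \<mu>) * lam) * (4 * (B + 2) * ucs\<^sup>2 * (ues\<^sup>2 / les\<^sup>2))"
      using f1 f2 by (intro mult_mono) auto
    then show ?thesis unfolding a3eq by (simp add: mult.assoc)
  qed
  have a3ge: "\<alpha>3 \<ge> 1" using a3ge2 by simp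
  have a3p: "\<alpha>3 > 0" using a3ge by simp
  have K1: "K \<ge> 1" unfolding K_def by auto
  have pw: "(real k + K) powr \<xi> \<ge> \<epsilon> * \<alpha>3 / \<alpha>2" for k
  proof (cases "\<xi> = 1")
    case True
    then have "K \<ge> \<epsilon> * \<alpha>3 / \<alpha>2" unfolding K_def by simp
    then show ?thesis using True K1 by simp
  next
    case False
    then have "K \<ge> (\<epsilon> * \<alpha>3 / \<alpha>2) powr (1 / \<xi>)" unfolding K_def by simp
    then have "((\<epsilon> * \<alpha>3 / \<alpha>2) powr (1 / \<xi>)) powr \<xi> \<le> (real k + K) powr \<xi>"
      using \<xi> by (intro powr_mono2) auto
    moreover have "((\<epsilon> * \<alpha>3 / \<alpha>2) powr (1 / \<xi>)) powr \<xi> = \<epsilon> * \<alpha>3 / \<alpha>2"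
      using \<xi> \<epsilon> a3p \<alpha>2_pos by (simp add: powr_powr)
    ultimately show ?thesis by simp
  qed
  have eps0: "\<epsilon>k k > 0" for k using step_def \<epsilon> K1 by simp
  have eps3: "\<epsilon>k k * \<alpha>3 \<le> \<alpha>2" for k
  proof -
    have p: "(real k + K) powr \<xi> > 0" using K1 by simp
    have "\<epsilon> * \<alpha>3 \<le> \<alpha>2 * (real k + K) powr \<xi>" using pw[of k] \<alpha>2_pos by (simp add: field_simps)
    then show ?thesis using step_def p by (simp add: field_simps)
  qed
  have eps1: "0 \<le> 1 - \<alpha>2 * \<epsilon>k k" for k
  proof -
    have "\<alpha>2 * (\<epsilon>k k * \<alpha>3) \<le> \<alpha>2 * \<alpha>2" by (rule mult_left_mono[OF eps3]) (use \<alpha>2_pos in simp)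
    also have "\<alpha>2 * \<alpha>2 \<le> 1 * 1" using a2le \<alpha>2_pos by (intro mult_mono) auto
    also have "(1::real) * 1 \<le> 1 * \<alpha>3" using a3ge by simp
    finally have "(\<alpha>2 * \<epsilon>k k) * \<alpha>3 \<le> 1 * \<alpha>3" by (simp add: mult.assoc)
    then have "\<alpha>2 * \<epsilon>k k \<le> 1" using a3p by (rule mult_right_le_imp_le)
    then show ?thesis by simp
  qed
  have Hcont: "continuous_on UNIV H"
  proof -
    obtain c0 where c0: "c0 > 0" "\<And>v. c0 * norm v \<le> nc v" using isn_lower[OF norms(1)] by blast
    obtain C0 where C0: "C0 > 0" "\<And>v. nc v \<le> C0 * norm v" using isn_upper[OF norms(1)] by blast
    have "(\<gamma> * C0 / c0)-lipschitz_on UNIV H"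
    proof (rule lipschitz_onI)
      fix u v :: 'a
      have "c0 * dist (H u) (H v) \<le> nc (H u - H v)" using c0(2) by (simp add: dist_norm)
      also have "\<dots> \<le> \<gamma> * nc (u - v)" using contr by blast
      also have "\<dots> \<le> \<gamma> * (C0 * dist u v)" using C0(2)[of "u - v"] \<gamma> by (simp add: dist_norm)
      finally show "dist (H u) (H v) \<le> \<gamma> * C0 / c0 * dist u v" using c0 by (simp add: field_simps)
    qed (use \<gamma> C0 c0 in simp)
    then show ?thesis by (rule lipschitz_on_continuous_on)
  qed
  have Hm[measurable]: "H \<in> borel_measurable borel" using Hcont by (rule borel_measurable_continuous_onI)
  have wm[measurable]: "w k \<in> borel_measurable M" for k using w_int by (auto intro: borel_measurable_integrable)
  have xm[measurable]: "x k \<in> borel_measurable M" for k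
  proof (induction k)
    case 0 then show ?case unfolding x0 by simp
  next
    case (Suc k)
    note [measurable] = Suc.IH
    have "x (Suc k) = (\<lambda>\<omega>. x k \<omega> + \<epsilon>k k *\<^sub>R (H (x k \<omega>) - x k \<omega> + w k \<omega>))" using rec by auto
    then show ?case by simp
  qed
  have Fsub: "subalgebra M (gen_filtr M x w k)" for k by (rule gen_filtr_props(1)[OF xm wm])
  have xF: "x k \<in> borel_measurable (gen_filtr M x w k)" for k by (rule gen_filtr_props(2)[OF xm wm])
  define Ek where "Ek k = (\<integral>\<omega>. E.Me (x k \<omega> - xstar) \<partial>M)" for k
  define c3 where "c3 = (L / \<mu>) * (8 * ucs\<^sup>2 * (1 + \<mu> / lcs\<^sup>2) + 4 * B * ues\<^sup>2 * (ucs / les)\<^sup>2 * (1 + \<mu> / lcs\<^sup>2))"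
  define c4 where "c4 = (L / \<mu>) * ues\<^sup>2 * (A + 2 * B * (ucs / les)\<^sup>2 * (nc xstar)\<^sup>2)"
  have step: "integrable M (\<lambda>\<omega>. E.Me (x (Suc k) \<omega> - xstar)) \<and>
      Ek (Suc k) \<le> (1 - 2 * \<alpha>2 * \<epsilon>k k + (\<epsilon>k k)\<^sup>2 * c3) * Ek k + (\<epsilon>k k)\<^sup>2 * c4"
    if int: "integrable M (\<lambda>\<omega>. E.Me (x k \<omega> - xstar))" for k
    unfolding Ek_def c3_def c4_def
  proof (rule E.exp_step[OF M Fsub xF wm])
    show "\<And>\<omega>. x (Suc k) \<omega> = x k \<omega> + \<epsilon>k k *\<^sub>R (H (x k \<omega>) - x k \<omega> + w k \<omega>)" using rec by blast
    show "\<And>u v. nc (H u - H v) \<le> \<gamma> * nc (u - v)" using contr by blast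
    show "\<alpha>2 = 1 - \<gamma> * sqrt E.a1" unfolding \<alpha>2_def a1 ..
    show "\<And>u. les * ne u \<le> ns u \<and> ns u \<le> ues * ne u" using equiv_es by blast
    show "\<forall>b\<in>Basis. AE \<omega> in M. real_cond_exp M (gen_filtr M x w k) (\<lambda>\<omega>. w k \<omega> \<bullet> b) \<omega> = 0"
      using w_mean by blast
    show "AE \<omega> in M. nn_cond_exp M (gen_filtr M x w k) (\<lambda>\<omega>. ennreal ((ne (w k \<omega>))\<^sup>2)) \<omega> \<le> ennreal (A + B * (ne (x k \<omega>))\<^sup>2)"
      using w_var by blast
  qed (use fixpt \<gamma> eps0[of k] Hm norms(2) les ues AB int in auto)
  have intk: "integrable M (\<lambda>\<omega>. E.Me (x k \<omega> - xstar))" for k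
  proof (induction k)
    case 0 then show ?case unfolding x0 by simp
  next
    case (Suc k) then show ?case using step by blast
  qed
  have Ek0: "Ek k \<ge> 0" for k unfolding Ek_def by (rule integral_nonneg_AE) (simp add: E.Me_nonneg)
  have c3le: "c3 \<le> \<alpha>3"
  proof -
    have "c3 = (L / \<mu>) * lam * (8 * ucs\<^sup>2 + 4 * B * (ucs\<^sup>2 * (ues\<^sup>2 / les\<^sup>2)))"
      unfolding c3_def lam_def using les by (simp add: field_simps power_divide)
    also have "\<dots> \<le> (L / \<mu>) * lam * (8 * ucs\<^sup>2 * (ues\<^sup>2 / les\<^sup>2) + 4 * B * (ucs\<^sup>2 * (ues\<^sup>2 / les\<^sup>2)))"
    proof -
      have "8 * ucs\<^sup>2 * 1 \<le> 8 * ucs\<^sup>2 * (ues\<^sup>2 / les\<^sup>2)" using Q2 by (intro mult_left_mono) auto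
      then show ?thesis using L1 \<mu> lam0 by (intro mult_left_mono) auto
    qed
    also have "\<dots> = \<alpha>3" unfolding a3eq by (simp add: algebra_simps)
    finally show ?thesis .
  qed
  have c4le: "c4 \<le> D"
  proof -
    have "A \<le> (ucs / les)\<^sup>2 * A" using Q1 AB by (simp add: mult_le_cancel_right1)
    then have "A + 2 * B * (ucs / les)\<^sup>2 * (nc xstar)\<^sup>2 \<le> (ucs / les)\<^sup>2 * C" unfolding C_def by (simp add: algebra_simps)
    then have "(L / \<mu>) * ues\<^sup>2 * (A + 2 * B * (ucs / les)\<^sup>2 * (nc xstar)\<^sup>2) \<le> (L / \<mu>) * ues\<^sup>2 * ((ucs / les)\<^sup>2 * C)"
      using L1 \<mu> by (intro mult_left_mono) auto
    then show ?thesis unfolding c4_def D_def by (simp add: mult.assoc)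
  qed
  have recE: "Ek (Suc k) \<le> (1 - \<alpha>2 * \<epsilon>k k) * Ek k + (\<epsilon>k k)\<^sup>2 * D" for k
  proof -
    have "(\<epsilon>k k)\<^sup>2 * c3 \<le> (\<epsilon>k k)\<^sup>2 * \<alpha>3" using c3le by (intro mult_left_mono) auto
    also have "\<dots> = \<epsilon>k k * (\<epsilon>k k * \<alpha>3)" by (simp add: power2_eq_square)
    also have "\<dots> \<le> \<epsilon>k k * \<alpha>2" using eps3[of k] eps0[of k] by (intro mult_left_mono) auto
    finally have "1 - 2 * \<alpha>2 * \<epsilon>k k + (\<epsilon>k k)\<^sup>2 * c3 \<le> 1 - \<alpha>2 * \<epsilon>k k" by (simp add: algebra_simps)
    then have "(1 - 2 * \<alpha>2 * \<epsilon>k k + (\<epsilon>k k)\<^sup>2 * c3) * Ek k \<le> (1 - \<alpha>2 * \<epsilon>k k) * Ek k"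
      using Ek0[of k] by (rule mult_right_mono)
    moreover have "(\<epsilon>k k)\<^sup>2 * c4 \<le> (\<epsilon>k k)\<^sup>2 * D" using c4le by (intro mult_left_mono) auto
    ultimately show ?thesis using step[OF intk[of k]] by linarith
  qed
  define V0 where "V0 = E.Me (x0 - xstar)"
  have EkV: "Ek k \<le> (\<Prod>j<k. 1 - \<alpha>2 * \<epsilon>k j) * V0 + D * Sq \<alpha>2 \<epsilon>k k" for k
  proof (rule rec_bound)
    show "\<And>k. Ek (Suc k) \<le> (1 - \<alpha>2 * \<epsilon>k k) * Ek k + (\<epsilon>k k)\<^sup>2 * D" by (rule recE)
    show "\<And>k. 0 \<le> 1 - \<alpha>2 * \<epsilon>k k" by (rule eps1)
    show "Ek 0 \<le> V0" unfolding Ek_def V0_def x0 by (simp add: P.prob_space)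
  qed
  define Pk where "Pk k = (\<Prod>j<k. 1 - \<alpha>2 * \<epsilon>k j)" for k
  have Pk0: "Pk k \<ge> 0" for k unfolding Pk_def using eps1 by (intro prod_nonneg) auto
  have a4p: "\<alpha>4 > 0" unfolding \<alpha>4_def using a3p AB by simp
  have n0: "\<alpha>1 * (nc (x0 - xstar))\<^sup>2 \<ge> 0" using a1p by simp
  have a4C: "\<alpha>4 * C \<ge> 0" using a4p C0 by simp
  have mainb: "(\<integral>\<^sup>+\<omega>. ennreal ((nc (x k \<omega> - xstar))\<^sup>2) \<partial>M) \<le> ennreal (\<alpha>1 * (nc (x0 - xstar))\<^sup>2 * Pk k + \<alpha>4 * C * Sq \<alpha>2 \<epsilon>k k)" for k
  proof -
    have [measurable]: "nc \<in> borel_measurable borel" using isn_meas norms(1) by auto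
    have inc: "integrable M (\<lambda>\<omega>. (nc (x k \<omega> - xstar))\<^sup>2)"
    proof (rule Bochner_Integration.integrable_bound[OF integrable_mult_right[OF intk[of k], of "2 * lam"]])
      show "(\<lambda>\<omega>. (nc (x k \<omega> - xstar))\<^sup>2) \<in> borel_measurable M" by measurable
      show "AE \<omega> in M. norm ((nc (x k \<omega> - xstar))\<^sup>2) \<le> norm (2 * lam * E.Me (x k \<omega> - xstar))"
        using E.nc_Me E.Me_nonneg lam0 unfolding lam_def by (intro AE_I2) (simp add: abs_of_nonneg)
    qed
    have "(\<integral>\<^sup>+\<omega>. ennreal ((nc (x k \<omega> - xstar))\<^sup>2) \<partial>M) = ennreal (\<integral>\<omega>. (nc (x k \<omega> - xstar))\<^sup>2 \<partial>M)"
      using inc by (intro nn_integral_eq_integral) auto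
    also have "\<dots> \<le> ennreal (\<alpha>1 * (nc (x0 - xstar))\<^sup>2 * Pk k + \<alpha>4 * C * Sq \<alpha>2 \<epsilon>k k)"
    proof (rule ennreal_leI)
      have "(\<integral>\<omega>. (nc (x k \<omega> - xstar))\<^sup>2 \<partial>M) \<le> (\<integral>\<omega>. 2 * lam * E.Me (x k \<omega> - xstar) \<partial>M)"
        using inc intk[of k] E.nc_Me unfolding lam_def by (intro integral_mono) auto
      also have "\<dots> = 2 * lam * Ek k" unfolding Ek_def by simp
      also have "\<dots> \<le> 2 * lam * (Pk k * V0 + D * Sq \<alpha>2 \<epsilon>k k)"
        using EkV[of k] lam0 unfolding Pk_def by (intro mult_left_mono) auto
      also have "\<dots> = Pk k * (2 * lam * V0) + (2 * lam * D) * Sq \<alpha>2 \<epsilon>k k" by (simp add: algebra_simps)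
      also have "\<dots> \<le> Pk k * (\<alpha>1 * (nc (x0 - xstar))\<^sup>2) + \<alpha>4 * C * Sq \<alpha>2 \<epsilon>k k"
      proof -
        have u: "1 + \<mu> / ucs\<^sup>2 > 0" using \<mu> ucs0 by (simp add: add_pos_pos)
        have "V0 \<le> (nc (x0 - xstar))\<^sup>2 / (2 * (1 + \<mu> / ucs\<^sup>2))" unfolding V0_def by (rule E.Me_upper)
        then have "2 * lam * V0 \<le> 2 * lam * ((nc (x0 - xstar))\<^sup>2 / (2 * (1 + \<mu> / ucs\<^sup>2)))"
          using lam0 by (intro mult_left_mono) auto
        also have "\<dots> = \<alpha>1 * (nc (x0 - xstar))\<^sup>2"
        proof -
          define U where "U = 1 + \<mu> / ucs\<^sup>2"
          have U: "U > 0" unfolding U_def by (rule u)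
          have a1U: "\<alpha>1 = lam / U" unfolding \<alpha>1_def lam_def U_def ..
          show ?thesis unfolding a1U U_def[symmetric] using U by (simp add: field_simps)
        qed
        finally have "Pk k * (2 * lam * V0) \<le> Pk k * (\<alpha>1 * (nc (x0 - xstar))\<^sup>2)" using Pk0 by (intro mult_left_mono) auto
        then show ?thesis unfolding a4eq by simp
      qed
      finally show "(\<integral>\<omega>. (nc (x k \<omega> - xstar))\<^sup>2 \<partial>M) \<le> \<alpha>1 * (nc (x0 - xstar))\<^sup>2 * Pk k + \<alpha>4 * C * Sq \<alpha>2 \<epsilon>k k"
        by (simp add: mult.commute)
    qed
    finally show ?thesis .
  qed
  have fin: "(\<integral>\<^sup>+\<omega>. ennreal ((nc (x k \<omega> - xstar))\<^sup>2) \<partial>M) \<le> ennreal (Tgt1 + Tgt2)"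
    if "Pk k \<le> P1" "Sq \<alpha>2 \<epsilon>k k \<le> S1" "\<alpha>1 * (nc (x0 - xstar))\<^sup>2 * P1 \<le> Tgt1" "\<alpha>4 * C * S1 \<le> Tgt2" for k P1 S1 Tgt1 Tgt2
  proof -
    have "\<alpha>1 * (nc (x0 - xstar))\<^sup>2 * Pk k \<le> \<alpha>1 * (nc (x0 - xstar))\<^sup>2 * P1" using that(1) n0 by (rule mult_left_mono)
    moreover have "\<alpha>4 * C * Sq \<alpha>2 \<epsilon>k k \<le> \<alpha>4 * C * S1" using that(2) a4C by (rule mult_left_mono)
    ultimately have "\<alpha>1 * (nc (x0 - xstar))\<^sup>2 * Pk k + \<alpha>4 * C * Sq \<alpha>2 \<epsilon>k k \<le> Tgt1 + Tgt2" using that(3,4) by linarith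
    then show ?thesis using mainb[of k] by (meson ennreal_leI order_trans)
  qed
  have K0: "K > 0" using K1 by simp
  define c where "c = \<alpha>2 * \<epsilon>"
  have cp: "c > 0" unfolding c_def using \<alpha>2_pos \<epsilon> by simp
  have eq1: "\<epsilon>k j = \<epsilon> / (real j + K)" if "\<xi> = 1" for j
    using step_def that K0 by simp
  have ae1: "\<alpha>2 * \<epsilon>k j = c / (real j + K)" if "\<xi> = 1" for j
    unfolding eq1[OF that] c_def by simp
  have Pb1: "Pk k \<le> (K / (real k + K)) powr c" if x1: "\<xi> = 1" for k
  proof -
    have "Pk k = (\<Prod>j\<in>{0..<k}. 1 - c / (real j + K))" unfolding Pk_def ae1[OF x1] by (simp add: lessThan_atLeast0)
    also have "\<dots> \<le> ((real 0 + K) / (real k + K)) powr c"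
      by (rule prod_bound[OF K0 less_imp_le[OF cp]]) (use eps1 ae1[OF x1] in auto)
    finally show ?thesis by simp
  qed
  have Sb1: "Sq \<alpha>2 \<epsilon>k k \<le> \<epsilon>\<^sup>2 / (real k + K) powr c * (\<Sum>i<k. (real i + 1 + K) powr c / (real i + K)\<^sup>2)"
    if x1: "\<xi> = 1" for k
  proof -
    have "Sq \<alpha>2 \<epsilon>k k = (\<Sum>i<k. (\<epsilon>k i)\<^sup>2 * (\<Prod>j\<in>{Suc i..<k}. 1 - c / (real j + K)))"
      unfolding Sq_sum ae1[OF x1] ..
    also have "\<dots> \<le> (\<Sum>i<k. \<epsilon>\<^sup>2 / (real k + K) powr c * ((real i + 1 + K) powr c / (real i + K)\<^sup>2))"
    proof (rule sum_mono)
      fix i assume "i \<in> {..<k}"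
      then have ik: "Suc i \<le> k" by simp
      have "(\<Prod>j\<in>{Suc i..<k}. 1 - c / (real j + K)) \<le> ((real (Suc i) + K) / (real k + K)) powr c"
        by (rule prod_bound[OF K0 less_imp_le[OF cp] _ ik]) (use eps1 ae1[OF x1] in auto)
      then have "(\<epsilon>k i)\<^sup>2 * (\<Prod>j\<in>{Suc i..<k}. 1 - c / (real j + K)) \<le> (\<epsilon>k i)\<^sup>2 * ((real (Suc i) + K) / (real k + K)) powr c"
        by (intro mult_left_mono) auto
      also have "\<dots> = \<epsilon>\<^sup>2 / (real k + K) powr c * ((real i + 1 + K) powr c / (real i + K)\<^sup>2)"
        unfolding eq1[OF x1] using K0 by (simp add: powr_divide power_divide add_ac)
      finally show "(\<epsilon>k i)\<^sup>2 * (\<Prod>j\<in>{Suc i..<k}. 1 - c / (real j + K)) \<le> \<epsilon>\<^sup>2 / (real k + K) powr c * ((real i + 1 + K) powr c / (real i + K)\<^sup>2)" .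
    qed
    also have "\<dots> = \<epsilon>\<^sup>2 / (real k + K) powr c * (\<Sum>i<k. (real i + 1 + K) powr c / (real i + K)\<^sup>2)"
      by (simp add: sum_distrib_left)
    finally show ?thesis .
  qed
  have Kc: "K \<ge> \<epsilon> * \<alpha>3 / \<alpha>2" if "\<xi> = 1" using that unfolding K_def by simp
  show ?thesis
  proof (intro allI conjI impI)
    fix k :: nat
    assume h: "\<xi> = 1 \<and> \<epsilon> < 1 / \<alpha>2"
    then have x1: "\<xi> = 1" and c1: "c < 1" unfolding c_def using \<alpha>2_pos by (auto simp: field_simps)
    show "(\<integral>\<^sup>+\<omega>. ennreal ((nc (x k \<omega> - xstar))\<^sup>2) \<partial>M)
       \<le> ennreal (\<alpha>1 * (nc (x0 - xstar))\<^sup>2 * (K / (real k + K)) powr (\<alpha>2 * \<epsilon>)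
          + 4 * \<epsilon>\<^sup>2 * \<alpha>4 / (1 - \<alpha>2 * \<epsilon>)
            * (A + 2 * B * (nc xstar)\<^sup>2) / (real k + K) powr (\<alpha>2 * \<epsilon>))"
    proof (rule fin[OF Pb1[OF x1] order_trans[OF Sb1[OF x1]]])
      show "\<epsilon>\<^sup>2 / (real k + K) powr c * (\<Sum>i<k. (real i + 1 + K) powr c / (real i + K)\<^sup>2) \<le> \<epsilon>\<^sup>2 / (real k + K) powr c * (4 / (1 - c))"
        by (intro mult_left_mono sum_c1) (use K1 cp c1 in auto)
      show "\<alpha>1 * (nc (x0 - xstar))\<^sup>2 * (K / (real k + K)) powr c \<le> \<alpha>1 * (nc (x0 - xstar))\<^sup>2 * (K / (real k + K)) powr (\<alpha>2 * \<epsilon>)"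
        unfolding c_def ..
      show "\<alpha>4 * C * (\<epsilon>\<^sup>2 / (real k + K) powr c * (4 / (1 - c))) \<le> 4 * \<epsilon>\<^sup>2 * \<alpha>4 / (1 - \<alpha>2 * \<epsilon>) * (A + 2 * B * (nc xstar)\<^sup>2) / (real k + K) powr (\<alpha>2 * \<epsilon>)"
        unfolding c_def C_def by (simp add: field_simps)
    qed
  next
    fix k :: nat
    assume h: "\<xi> = 1 \<and> \<epsilon> = 1 / \<alpha>2"
    then have x1: "\<xi> = 1" and c1: "c = 1" unfolding c_def using \<alpha>2_pos by auto
    have K2: "K \<ge> 2"
    proof -
      have "\<epsilon> * \<alpha>3 / \<alpha>2 = \<alpha>3 / \<alpha>2\<^sup>2" using h by (simp add: power2_eq_square)
      also have "\<dots> \<ge> \<alpha>3" using a2le \<alpha>2_pos a3p by (simp add: field_simps power_le_one mult_left_le)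
      finally show ?thesis using Kc[OF x1] a3ge2 by linarith
    qed
    have ln0: "ln (real k + K) \<ge> 0" using K1 by simp
    show "(\<integral>\<^sup>+\<omega>. ennreal ((nc (x k \<omega> - xstar))\<^sup>2) \<partial>M)
       \<le> ennreal (\<alpha>1 * (nc (x0 - xstar))\<^sup>2 * (K / (real k + K))
          + 4 * \<alpha>4 / \<alpha>2\<^sup>2 * ((A + 2 * B * (nc xstar)\<^sup>2) * ln (real k + K)) / (real k + K))"
    proof (rule fin[OF Pb1[OF x1] order_trans[OF Sb1[OF x1]]])
      have "(\<Sum>i<k. (real i + 1 + K) powr c / (real i + K)\<^sup>2) = (\<Sum>i<k. (real i + 1 + K) / (real i + K)\<^sup>2)"
        unfolding c1 using K0 by (intro sum.cong) auto
      also have "\<dots> \<le> 2 * ln (real k + K)" by (rule sum_c2[OF K2])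
      finally show "\<epsilon>\<^sup>2 / (real k + K) powr c * (\<Sum>i<k. (real i + 1 + K) powr c / (real i + K)\<^sup>2) \<le> \<epsilon>\<^sup>2 / (real k + K) powr c * (2 * ln (real k + K))"
        by (intro mult_left_mono) auto
      show "\<alpha>1 * (nc (x0 - xstar))\<^sup>2 * (K / (real k + K)) powr c \<le> \<alpha>1 * (nc (x0 - xstar))\<^sup>2 * (K / (real k + K))"
        unfolding c1 using K0 by simp
      have "\<alpha>4 * C * (\<epsilon>\<^sup>2 / (real k + K) powr c * (2 * ln (real k + K))) = 2 * \<alpha>4 / \<alpha>2\<^sup>2 * (C * ln (real k + K)) / (real k + K)"
      proof -
        have e2: "\<epsilon>\<^sup>2 = 1 / \<alpha>2\<^sup>2" using h by (simp add: power_divide)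
        have kp: "real k + K > 0" using K0 by simp
        show ?thesis unfolding c1 e2 using kp \<alpha>2_pos by (simp add: field_simps)
      qed
      also have "\<dots> \<le> 4 * \<alpha>4 / \<alpha>2\<^sup>2 * (C * ln (real k + K)) / (real k + K)"
        using a4p \<alpha>2_pos C0 ln0 K0 by (intro divide_right_mono mult_right_mono) auto
      finally show "\<alpha>4 * C * (\<epsilon>\<^sup>2 / (real k + K) powr c * (2 * ln (real k + K))) \<le> 4 * \<alpha>4 / \<alpha>2\<^sup>2 * ((A + 2 * B * (nc xstar)\<^sup>2) * ln (real k + K)) / (real k + K)"
        unfolding C_def .
    qed
  next
    fix k :: nat
    assume h: "\<xi> = 1 \<and> \<epsilon> > 1 / \<alpha>2"
    then have x1: "\<xi> = 1" and c1: "c > 1" unfolding c_def using \<alpha>2_pos by (auto simp: field_simps)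
    have Kc2: "c \<le> K"
    proof -
      have "\<alpha>2 * \<alpha>2 \<le> 1 * \<alpha>3" using a2le \<alpha>2_pos a3ge by (intro mult_mono) auto
      then have "\<alpha>2 * \<epsilon> \<le> \<epsilon> * \<alpha>3 / \<alpha>2" using \<alpha>2_pos \<epsilon> by (simp add: field_simps)
      then show ?thesis unfolding c_def using Kc[OF x1] by linarith
    qed
    have kp: "real k + K > 0" using K0 by simp
    show "(\<integral>\<^sup>+\<omega>. ennreal ((nc (x k \<omega> - xstar))\<^sup>2) \<partial>M)
       \<le> ennreal (\<alpha>1 * (nc (x0 - xstar))\<^sup>2 * (K / (real k + K)) powr (\<alpha>2 * \<epsilon>)
          + 4 * exp 1 * \<epsilon>\<^sup>2 * \<alpha>4 / (\<alpha>2 * \<epsilon> - 1)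
            * (A + 2 * B * (nc xstar)\<^sup>2) / (real k + K))"
    proof (rule fin[OF Pb1[OF x1] order_trans[OF Sb1[OF x1]]])
      have "(\<Sum>i<k. (real i + 1 + K) powr c / (real i + K)\<^sup>2) \<le> 2 * exp 1 * ((real k + K) powr (c - 1) - K powr (c - 1)) / (c - 1)"
        by (rule sum_c3[OF K1 c1 Kc2])
      also have "\<dots> \<le> 2 * exp 1 * (real k + K) powr (c - 1) / (c - 1)"
        using c1 by (intro divide_right_mono) auto
      finally show "\<epsilon>\<^sup>2 / (real k + K) powr c * (\<Sum>i<k. (real i + 1 + K) powr c / (real i + K)\<^sup>2) \<le> \<epsilon>\<^sup>2 / (real k + K) powr c * (2 * exp 1 * (real k + K) powr (c - 1) / (c - 1))"
        by (intro mult_left_mono) auto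
      show "\<alpha>1 * (nc (x0 - xstar))\<^sup>2 * (K / (real k + K)) powr c \<le> \<alpha>1 * (nc (x0 - xstar))\<^sup>2 * (K / (real k + K)) powr (\<alpha>2 * \<epsilon>)"
        unfolding c_def ..
      have e: "(real k + K) powr (c - 1) / (real k + K) powr c = 1 / (real k + K)"
        using kp by (simp add: powr_diff)
      have "\<alpha>4 * C * (\<epsilon>\<^sup>2 / (real k + K) powr c * (2 * exp 1 * (real k + K) powr (c - 1) / (c - 1)))
          = 2 * exp 1 * \<epsilon>\<^sup>2 * \<alpha>4 / (c - 1) * C * ((real k + K) powr (c - 1) / (real k + K) powr c)"
        by (simp add: field_simps)
      also have "\<dots> = 2 * exp 1 * \<epsilon>\<^sup>2 * \<alpha>4 / (c - 1) * C / (real k + K)" unfolding e by simp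
      also have "\<dots> \<le> 4 * exp 1 * \<epsilon>\<^sup>2 * \<alpha>4 / (c - 1) * C / (real k + K)"
        using a4p c1 C0 kp by (intro divide_right_mono mult_right_mono) auto
      finally show "\<alpha>4 * C * (\<epsilon>\<^sup>2 / (real k + K) powr c * (2 * exp 1 * (real k + K) powr (c - 1) / (c - 1))) \<le> 4 * exp 1 * \<epsilon>\<^sup>2 * \<alpha>4 / (\<alpha>2 * \<epsilon> - 1) * (A + 2 * B * (nc xstar)\<^sup>2) / (real k + K)"
        unfolding C_def c_def .
    qed
  next
    fix k :: nat
    assume h: "0 < \<xi> \<and> \<xi> < 1"
    then have xl: "\<xi> < 1" by simp
    have ae4: "\<alpha>2 * \<epsilon>k j = c / (real j + K) powr \<xi>" for j using step_def unfolding c_def by simp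
    have Kb: "2 * \<xi> / (\<alpha>2 * \<epsilon>) \<le> K powr (1 - \<xi>)"
    proof -
      have "K \<ge> (2 * \<xi> / (\<alpha>2 * \<epsilon>)) powr (1 / (1 - \<xi>))" using xl unfolding K_def by simp
      then have "((2 * \<xi> / (\<alpha>2 * \<epsilon>)) powr (1 / (1 - \<xi>))) powr (1 - \<xi>) \<le> K powr (1 - \<xi>)"
        using xl by (intro powr_mono2) auto
      moreover have "((2 * \<xi> / (\<alpha>2 * \<epsilon>)) powr (1 / (1 - \<xi>))) powr (1 - \<xi>) = 2 * \<xi> / (\<alpha>2 * \<epsilon>)"
        using xl \<xi> \<epsilon> \<alpha>2_pos by (simp add: powr_powr)
      ultimately show ?thesis by simp
    qed
    show "(\<integral>\<^sup>+\<omega>. ennreal ((nc (x k \<omega> - xstar))\<^sup>2) \<partial>M)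
       \<le> ennreal (\<alpha>1 * (nc (x0 - xstar))\<^sup>2
            * exp (- (\<alpha>2 * \<epsilon> / (1 - \<xi>)) * ((real k + K) powr (1 - \<xi>) - K powr (1 - \<xi>)))
          + 2 * \<epsilon> * \<alpha>4 / \<alpha>2 * (A + 2 * B * (nc xstar)\<^sup>2) / (real k + K) powr \<xi>)"
    proof (rule fin)
      show "Pk k \<le> exp (- (c / (1 - \<xi>)) * ((real k + K) powr (1 - \<xi>) - K powr (1 - \<xi>)))"
        unfolding Pk_def ae4 by (rule prod_c4[OF K0 \<xi>(1) xl less_imp_le[OF cp]]) (use eps1 ae4 in auto)
      show "Sq \<alpha>2 \<epsilon>k k \<le> (2 / \<alpha>2) * \<epsilon>k k"
        by (rule Sq_c4[OF _ \<alpha>2_pos \<epsilon> K0 \<xi>(1) xl Kb eps1]) (rule step_def[rule_format])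
      show "\<alpha>1 * (nc (x0 - xstar))\<^sup>2 * exp (- (c / (1 - \<xi>)) * ((real k + K) powr (1 - \<xi>) - K powr (1 - \<xi>))) \<le> \<alpha>1 * (nc (x0 - xstar))\<^sup>2
            * exp (- (\<alpha>2 * \<epsilon> / (1 - \<xi>)) * ((real k + K) powr (1 - \<xi>) - K powr (1 - \<xi>)))"
        unfolding c_def ..
      show "\<alpha>4 * C * ((2 / \<alpha>2) * \<epsilon>k k) \<le> 2 * \<epsilon> * \<alpha>4 / \<alpha>2 * (A + 2 * B * (nc xstar)\<^sup>2) / (real k + K) powr \<xi>"
      proof -
        have ek: "\<epsilon>k k = \<epsilon> / (real k + K) powr \<xi>" using step_def by blast
        have kp: "(real k + K) powr \<xi> > 0" using K0 by simp
        show ?thesis unfolding C_def ek using kp \<alpha>2_pos by (simp add: field_simps)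
      qed
    qed
  qed
qed

end
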